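(* Let $\{X_t:t\in\mathbb{Z}\}$ be a real-valued WAP(1) time series such that (i) the set $\Lambda=\{\lambda\in[0,2\pi): M_t(EX_te^{-i\lambda t})\neq0\}$ is finite; (ii) there is a finite constant $K$ such that for all $n$ and all positive integers $b\le n$, $$\sup_{s=1,\dots,n-b+1}E\Big(\frac1{\sqrt b}\sum_{t=s}^{s+b-1}(X_t-EX_t)\Big)^4<K.$$ Then there is a finite constant $K'$ such that for all $n$ and all $b\le n$, $$\sup_{s=1,\dots,n-b+1}E\Big(\frac1{\sqrt b}\sum_{t=s}^{s+b-1}(X_t-\mu)\Big)^4<K',$$ where $\mu=M_t(EX_t)$.
   Context: A real or complex function $f$ on $\mathbb{Z}$ is almost periodic if for every $\epsilon>0$ there is $l_\epsilon$ such that every interval of length greater than $l_\epsilon$ contains some $p_\epsilon$ with $\sup_{t\in\mathbb{Z}}|f(t+p_\epsilon)-f(t)|<\epsilon$. For such $f$, $M_t(f(t))=\lim_{n\to\infty}\frac1n\sum_{j=s}^{s+n-1}f(j)$ exists uniformly in $s$. A time series is WAP(1) if $E|X_t|<\infty$ for all $t$ and $t\mapsto EX_t$ is almost periodic. *)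

theory Defs
  imports "HOL-Probability.Probability"
begin

definition almost_periodic :: "(int \<Rightarrow> 'b::real_normed_vector) \<Rightarrow> bool" where
  "almost_periodic f \<longleftrightarrow>
     (\<forall>\<epsilon>>0. \<exists>l. \<forall>a::int. \<forall>L::int. L > l \<longrightarrow>
        (\<exists>p\<in>{a..a+L}. \<exists>\<delta><\<epsilon>. \<forall>t. norm (f (t + p) - f t) \<le> \<delta>))"

text \<open>Mean M_t(f(t)) = lim_n (1/n) sum_{j=s}^{s+n-1} f(j); for almost periodic f it exists
  uniformly in s, so we take s = 0.\<close>
definition ap_mean :: "(int \<Rightarrow> 'b::real_normed_vector) \<Rightarrow> 'b" where
  "ap_mean f = lim (\<lambda>n::nat. (\<Sum>j<n. f (int j)) /\<^sub>R real n)"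

definition WAP1 :: "'a measure \<Rightarrow> (int \<Rightarrow> 'a \<Rightarrow> real) \<Rightarrow> bool" where
  "WAP1 M X \<longleftrightarrow> (\<forall>t. integrable M (X t)) \<and>
     almost_periodic (\<lambda>t. integral\<^sup>L M (X t))"

end

theory Submission
  imports Defs
begin


definition TB :: "(int \<Rightarrow> 'b::real_normed_vector) \<Rightarrow> bool" where
  "TB f \<longleftrightarrow> (\<forall>e>0. \<exists>R. finite R \<and> (\<forall>a. \<exists>r\<in>R. \<forall>t. norm (f (t + a) - f (t + r)) \<le> e))"

lemma tri3: "norm ((x::'b::real_normed_vector) - y) \<le> norm (x - z) + norm (y - z)"
  using norm_triangle_ineq4[of "x - z" "y - z"] by simp

lemma rep_lemma:
  assumes "finite K" "\<And>a::int. \<exists>x\<in>K. P x a"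
  shows "\<exists>R. finite R \<and> (\<forall>a. \<exists>r\<in>R. \<exists>x\<in>K. P x a \<and> P x r)"
proof -
  define R where "R = (\<lambda>x. SOME a. P x a) ` {x\<in>K. \<exists>a. P x a}"
  have "finite R" using assms(1) by (simp add: R_def)
  moreover have "\<exists>r\<in>R. \<exists>x\<in>K. P x a \<and> P x r" for a
  proof -
    obtain x where x: "x \<in> K" "P x a" using assms(2) by blast
    have "P x (SOME a. P x a)" using x by (metis someI_ex)
    thus ?thesis using x unfolding R_def by blast
  qed
  ultimately show ?thesis by blast
qed

lemma AP_imp_TB:
  assumes "almost_periodic f"
  shows "TB f"
  unfolding TB_def
proof (intro allI impI)
  fix e :: real assume e: "e > 0"
  obtain l where l: "\<forall>a::int. \<forall>L::int. L > l \<longrightarrow>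
        (\<exists>p\<in>{a..a+L}. \<exists>\<delta><e. \<forall>t. norm (f (t + p) - f t) \<le> \<delta>)"
    using assms e unfolding almost_periodic_def by blast
  define L where "L = max l 0 + 1"
  have "L > l" "L \<ge> 0" by (auto simp: L_def)
  have "\<exists>r\<in>{0..L}. \<forall>t. norm (f (t + a) - f (t + r)) \<le> e" for a
  proof -
    obtain p \<delta> where p: "p \<in> {a-L..a-L+L}" "\<delta> < e" "\<forall>t. norm (f (t + p) - f t) \<le> \<delta>"
      using l \<open>L > l\<close> by blast
    have "norm (f (t + a) - f (t + (a - p))) \<le> e" for t
      using p(3)[rule_format, of "t + (a - p)"] p(2) by (simp add: algebra_simps)
    moreover have "a - p \<in> {0..L}" using p(1) by auto
    ultimately show ?thesis by blast
  qed
  thus "\<exists>R. finite R \<and> (\<forall>a. \<exists>r\<in>R. \<forall>t. norm (f (t + a) - f (t + r)) \<le> e)"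
    by (intro exI[of _ "{0..L}"]) auto
qed

lemma TB_bounded:
  assumes "TB f" shows "\<exists>B. \<forall>t. norm (f t) \<le> B"
proof -
  obtain R where R: "finite R" "\<forall>a. \<exists>r\<in>R. \<forall>t. norm (f (t + a) - f (t + r)) \<le> 1"
    using assms unfolding TB_def by (meson zero_less_one)
  define B where "B = 1 + Max (insert 0 ((\<lambda>r. norm (f r)) ` R))"
  have "norm (f a) \<le> B" for a
  proof -
    obtain r where r: "r \<in> R" "norm (f (0 + a) - f (0 + r)) \<le> 1" using R(2) by blast
    have "norm (f r) \<le> Max (insert 0 ((\<lambda>r. norm (f r)) ` R))"
      using r(1) R(1) by (intro Max_ge) auto
    moreover have "norm (f a) \<le> norm (f r) + norm (f a - f r)"
      by (metis norm_triangle_sub add.commute)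
    ultimately show ?thesis using r(2) by (simp add: B_def)
  qed
  thus ?thesis by blast
qed

lemma TB_bounded_pos:
  assumes "TB f" shows "\<exists>B>0. \<forall>t. norm (f t) \<le> B"
proof -
  obtain B where "\<forall>t. norm (f t) \<le> B" using TB_bounded[OF assms] by blast
  thus ?thesis by (intro exI[of _ "max B 1"]) (auto intro: order_trans)
qed

lemma TB_joint:
  assumes "TB f" "TB g" "e > 0"
  shows "\<exists>R. finite R \<and> (\<forall>a. \<exists>r\<in>R. \<forall>t. norm (f (t + a) - f (t + r)) \<le> e \<and> norm (g (t + a) - g (t + r)) \<le> e)"
proof -
  obtain R1 where R1: "finite R1" "\<forall>a. \<exists>r\<in>R1. \<forall>t. norm (f (t + a) - f (t + r)) \<le> e/2"
    using assms(1,3) unfolding TB_def by (meson half_gt_zero)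
  obtain R2 where R2: "finite R2" "\<forall>a. \<exists>r\<in>R2. \<forall>t. norm (g (t + a) - g (t + r)) \<le> e/2"
    using assms(2,3) unfolding TB_def by (meson half_gt_zero)
  define P where "P = (\<lambda>(r1,r2) a. (\<forall>t. norm (f (t + a) - f (t + r1)) \<le> e/2) \<and> (\<forall>t. norm (g (t + a) - g (t + r2)) \<le> e/2))"
  have "\<exists>x\<in>R1 \<times> R2. P x a" for a
    using R1(2) R2(2) unfolding P_def by fast
  then obtain R where R: "finite R" "\<forall>a. \<exists>r\<in>R. \<exists>x\<in>R1\<times>R2. P x a \<and> P x r"
    using rep_lemma[of "R1 \<times> R2" P] R1(1) R2(1) by auto
  have "\<exists>r\<in>R. \<forall>t. norm (f (t + a) - f (t + r)) \<le> e \<and> norm (g (t + a) - g (t + r)) \<le> e" for a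
  proof -
    obtain r r1 r2 where r: "r \<in> R" "(r1,r2) \<in> R1\<times>R2" "P (r1,r2) a" "P (r1,r2) r"
      using R(2) by blast
    have "norm (f (t + a) - f (t + r)) \<le> e" for t
    proof -
      have "norm (f (t + a) - f (t + r)) \<le> norm (f (t + a) - f (t + r1)) + norm (f (t + r) - f (t + r1))"
        by (rule tri3)
      moreover have "norm (f (t + a) - f (t + r1)) \<le> e/2" "norm (f (t + r) - f (t + r1)) \<le> e/2"
        using r(3,4) unfolding P_def by auto
      ultimately show ?thesis by linarith
    qed
    moreover have "norm (g (t + a) - g (t + r)) \<le> e" for t
    proof -
      have "norm (g (t + a) - g (t + r)) \<le> norm (g (t + a) - g (t + r2)) + norm (g (t + r) - g (t + r2))"
        by (rule tri3)
      moreover have "norm (g (t + a) - g (t + r2)) \<le> e/2" "norm (g (t + r) - g (t + r2)) \<le> e/2"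
        using r(3,4) unfolding P_def by auto
      ultimately show ?thesis by linarith
    qed
    ultimately show ?thesis using r(1) by blast
  qed
  thus ?thesis using R(1) by blast
qed



lemma TB_map:
  assumes "TB f" "\<And>x y. norm (g x - g y) \<le> norm (f x - f y)"
  shows "TB g"
  unfolding TB_def
proof (intro allI impI)
  fix e :: real assume "e > 0"
  then obtain R where R: "finite R" "\<forall>a. \<exists>r\<in>R. \<forall>t. norm (f (t + a) - f (t + r)) \<le> e"
    using assms(1) unfolding TB_def by blast
  have "\<forall>a. \<exists>r\<in>R. \<forall>t. norm (g (t + a) - g (t + r)) \<le> e"
  proof
    fix a obtain r where r: "r \<in> R" "\<forall>t. norm (f (t + a) - f (t + r)) \<le> e" using R(2) by blast
    have "norm (g (t + a) - g (t + r)) \<le> e" for t using r(2)[rule_format, of t] assms(2)[of "t + a" "t + r"] by linarith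
    thus "\<exists>r\<in>R. \<forall>t. norm (g (t + a) - g (t + r)) \<le> e" using r(1) by blast
  qed
  thus "\<exists>R. finite R \<and> (\<forall>a. \<exists>r\<in>R. \<forall>t. norm (g (t + a) - g (t + r)) \<le> e)" using R(1) by blast
qed

lemma TB_shift: assumes "TB f" shows "TB (\<lambda>t. f (t + u))"
  unfolding TB_def
proof (intro allI impI)
  fix e :: real assume "e > 0"
  then obtain R where R: "finite R" "\<forall>a. \<exists>r\<in>R. \<forall>t. norm (f (t + a) - f (t + r)) \<le> e"
    using assms unfolding TB_def by blast
  have "\<exists>r\<in>R. \<forall>t. norm (f (t + a + u) - f (t + r + u)) \<le> e" for a
  proof -
    obtain r where r: "r \<in> R" "\<forall>t. norm (f (t + a) - f (t + r)) \<le> e" using R(2) by blast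
    have "norm (f (t + a + u) - f (t + r + u)) \<le> e" for t
    proof -
      have eq: "t + a + u = t + u + a" "t + r + u = t + u + r" by simp_all
      show ?thesis using r(2)[rule_format, of "t + u"] unfolding eq .
    qed
    thus ?thesis using r(1) by blast
  qed
  thus "\<exists>R. finite R \<and> (\<forall>a. \<exists>r\<in>R. \<forall>t. norm (f (t + a + u) - f (t + r + u)) \<le> e)" using R(1) by blast
qed

lemma TB_const: "TB (\<lambda>t. c)"
  unfolding TB_def by (intro allI impI exI[of _ "{0}"]) auto

lemma TB_add:
  assumes "TB f" "TB g" shows "TB (\<lambda>t. f t + g t)"
  unfolding TB_def
proof (intro allI impI)
  fix e :: real assume e: "e > 0"
  obtain R where R: "finite R" "\<forall>a. \<exists>r\<in>R. \<forall>t. norm (f (t + a) - f (t + r)) \<le> e/2 \<and> norm (g (t + a) - g (t + r)) \<le> e/2"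
    using TB_joint[OF assms, of "e/2"] e by auto
  have tri: "norm ((f x + g x) - (f y + g y)) \<le> norm (f x - f y) + norm (g x - g y)" for x y
    by (metis add_diff_add norm_triangle_ineq)
  have "\<exists>r\<in>R. \<forall>t. norm ((f (t + a) + g (t + a)) - (f (t + r) + g (t + r))) \<le> e" for a
  proof -
    obtain r where r: "r \<in> R" "\<forall>t. norm (f (t + a) - f (t + r)) \<le> e/2 \<and> norm (g (t + a) - g (t + r)) \<le> e/2"
      using R(2) by blast
    have "norm ((f (t + a) + g (t + a)) - (f (t + r) + g (t + r))) \<le> e" for t
      using r(2)[rule_format, of t] tri[of "t + a" "t + r"] by linarith
    thus ?thesis using r(1) by blast
  qed
  hence "\<forall>a. \<exists>r\<in>R. \<forall>t. norm ((f (t + a) + g (t + a)) - (f (t + r) + g (t + r))) \<le> e" by blast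
  thus "\<exists>R. finite R \<and> (\<forall>a. \<exists>r\<in>R. \<forall>t. norm ((f (t + a) + g (t + a)) - (f (t + r) + g (t + r))) \<le> e)"
    using R(1) by blast
qed

lemma TB_map2:
  assumes "TB f" "TB g" "C > 0" "\<And>x y. norm (h x - h y) \<le> C * (norm (f x - f y) + norm (g x - g y))"
  shows "TB h"
  unfolding TB_def
proof (intro allI impI)
  fix e :: real assume e: "e > 0"
  define d where "d = e / (2 * C)"
  have d: "d > 0" using e assms(3) by (simp add: d_def)
  have Cd: "C * (d + d) = e" using assms(3) by (simp add: d_def)
  obtain R where R: "finite R" "\<forall>a. \<exists>r\<in>R. \<forall>t. norm (f (t + a) - f (t + r)) \<le> d \<and> norm (g (t + a) - g (t + r)) \<le> d"
    using TB_joint[OF assms(1,2) d] by auto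
  have "\<exists>r\<in>R. \<forall>t. norm (h (t + a) - h (t + r)) \<le> e" for a
  proof -
    obtain r where r: "r \<in> R" "\<forall>t. norm (f (t + a) - f (t + r)) \<le> d \<and> norm (g (t + a) - g (t + r)) \<le> d"
      using R(2) by blast
    have "norm (h (t + a) - h (t + r)) \<le> e" for t
    proof -
      have "norm (h (t + a) - h (t + r)) \<le> C * (norm (f (t + a) - f (t + r)) + norm (g (t + a) - g (t + r)))"
        by (rule assms(4))
      also have "\<dots> \<le> C * (d + d)"
        using r(2)[rule_format, of t] assms(3) by (intro mult_left_mono add_mono) auto
      finally show ?thesis using Cd by simp
    qed
    thus ?thesis using r(1) by blast
  qed
  thus "\<exists>R. finite R \<and> (\<forall>a. \<exists>r\<in>R. \<forall>t. norm (h (t + a) - h (t + r)) \<le> e)" using R(1) by blast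
qed

lemma TB_mult:
  fixes f g :: "int \<Rightarrow> 'b::real_normed_algebra"
  assumes "TB f" "TB g" shows "TB (\<lambda>t. f t * g t)"
proof -
  obtain Bf where Bf: "Bf > 0" "\<forall>t. norm (f t) \<le> Bf" using TB_bounded_pos[OF assms(1)] by blast
  obtain Bg where Bg: "Bg > 0" "\<forall>t. norm (g t) \<le> Bg" using TB_bounded_pos[OF assms(2)] by blast
  have key: "norm (f x * g x - f y * g y) \<le> (Bf + Bg) * (norm (f x - f y) + norm (g x - g y))" for x y
  proof -
    have eq: "f x * g x - f y * g y = (f x - f y) * g x + f y * (g x - g y)"
      by (simp add: algebra_simps)
    have "norm (f x * g x - f y * g y) \<le> norm (f x - f y) * norm (g x) + norm (f y) * norm (g x - g y)"
      unfolding eq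
      using norm_triangle_ineq[of "(f x - f y) * g x" "f y * (g x - g y)"]
        norm_mult_ineq[of "f x - f y" "g x"] norm_mult_ineq[of "f y" "g x - g y"] by linarith
    also have "\<dots> \<le> norm (f x - f y) * (Bf + Bg) + (Bf + Bg) * norm (g x - g y)"
    proof -
      have "norm (g x) \<le> Bf + Bg" "norm (f y) \<le> Bf + Bg"
        using Bf(1) Bg(1) Bf(2)[rule_format, of y] Bg(2)[rule_format, of x] by linarith+
      thus ?thesis using Bf(1) Bg(1) by (intro add_mono mult_mono) auto
    qed
    also have "\<dots> = (Bf + Bg) * (norm (f x - f y) + norm (g x - g y))" by (simp add: algebra_simps)
    finally show ?thesis .
  qed
  show ?thesis by (rule TB_map2[OF assms _ key]) (use Bf Bg in auto)
qed

lemma TB_uminus: "TB f \<Longrightarrow> TB (\<lambda>t. - f t)"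
  by (erule TB_map) (simp add: norm_minus_commute)

lemma TB_diff: "TB f \<Longrightarrow> TB g \<Longrightarrow> TB (\<lambda>t. f t - g t)"
  using TB_add[of f "\<lambda>t. - g t"] TB_uminus[of g] by simp

lemma TB_cnj: "TB f \<Longrightarrow> TB (\<lambda>t. cnj (f t))"
  by (erule TB_map) (simp flip: complex_cnj_diff)

lemma TB_of_real: "TB (f :: int \<Rightarrow> real) \<Longrightarrow> TB (\<lambda>t. complex_of_real (f t))"
  by (erule TB_map) (simp flip: of_real_diff)

lemma TB_sum:
  assumes "finite A" "\<And>x. x \<in> A \<Longrightarrow> TB (F x)"
  shows "TB (\<lambda>t. \<Sum>x\<in>A. F x t)"
  using assms by (induction A rule: finite_induct) (auto intro: TB_add TB_const)

lemma TB_cis: "TB (\<lambda>t. cis (c * real_of_int t))"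
  unfolding TB_def
proof (intro allI impI)
  fix e :: real assume e: "e > 0"
  have "compact (sphere (0::complex) 1)" by simp
  then obtain k where k: "finite k" "sphere (0::complex) 1 \<subseteq> (\<Union>x\<in>k. ball x (e/2))"
    using e unfolding compact_eq_totally_bounded by (meson half_gt_zero)
  define P where "P = (\<lambda>x a. cis (c * real_of_int a) \<in> ball x (e/2))"
  have "\<exists>x\<in>k. P x a" for a
  proof -
    have "cis (c * real_of_int a) \<in> sphere 0 1" by simp
    thus ?thesis using k(2) unfolding P_def by blast
  qed
  then obtain R where R: "finite R" "\<forall>a. \<exists>r\<in>R. \<exists>x\<in>k. P x a \<and> P x r"
    using rep_lemma[OF k(1), of P] by blast
  have "\<exists>r\<in>R. \<forall>t. norm (cis (c * real_of_int (t + a)) - cis (c * real_of_int (t + r))) \<le> e" for a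
  proof -
    obtain r x where rx: "r \<in> R" "P x a" "P x r" using R(2) by blast
    have d: "dist (cis (c * real_of_int a)) (cis (c * real_of_int r)) < e"
      using rx(2,3) dist_triangle[of "cis (c * real_of_int a)" "cis (c * real_of_int r)" x]
    unfolding P_def mem_ball by (simp add: dist_commute)
    have "norm (cis (c * real_of_int (t + a)) - cis (c * real_of_int (t + r))) \<le> e" for t
    proof -
      have "cis (c * real_of_int (t + a)) - cis (c * real_of_int (t + r))
            = cis (c * real_of_int t) * (cis (c * real_of_int a) - cis (c * real_of_int r))"
        by (simp add: distrib_left cis_mult right_diff_distrib)
      hence "norm (cis (c * real_of_int (t + a)) - cis (c * real_of_int (t + r)))
            = norm (cis (c * real_of_int a) - cis (c * real_of_int r))"
        by (simp add: norm_mult)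
      thus ?thesis using d by (simp add: dist_norm)
    qed
    thus ?thesis using rx(1) by blast
  qed
  thus "\<exists>R. finite R \<and> (\<forall>a. \<exists>r\<in>R. \<forall>t. norm (cis (c * real_of_int (t + a)) - cis (c * real_of_int (t + r))) \<le> e)"
    using R(1) by blast
qed



definition avg :: "(int \<Rightarrow> 'b::real_normed_vector) \<Rightarrow> nat \<Rightarrow> int \<Rightarrow> 'b" where
  "avg f n s = (\<Sum>j<n. f (s + int j)) /\<^sub>R real n"

lemma sum_split_add: fixes a b :: nat shows "(\<Sum>j<a+b. F j) = (\<Sum>j<a. F j) + (\<Sum>j<b. F (a + j))"
  by (induction b) (simp_all add: add.assoc)

lemma sum_card_bound:
  assumes "\<And>j. j < d \<Longrightarrow> norm (F j) \<le> B"
  shows "norm (\<Sum>j<d. F j) \<le> real d * B"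
proof -
  have "norm (\<Sum>j<d. F j) \<le> (\<Sum>j<d. B)" by (rule sum_norm_le) (use assms in auto)
  thus ?thesis by simp
qed

lemma window_shift_nat:
  fixes f :: "int \<Rightarrow> 'b::real_normed_vector"
  assumes "\<forall>t. norm (f t) \<le> B"
  shows "norm ((\<Sum>j<n. f (x + int d + int j)) - (\<Sum>j<n. f (x + int j))) \<le> 2 * real d * B"
proof -
  have S1: "(\<Sum>j<n+d. f (x + int j)) = (\<Sum>j<n. f (x + int j)) + (\<Sum>j<d. f (x + int (n + j)))"
    by (rule sum_split_add)
  have S2: "(\<Sum>j<d+n. f (x + int j)) = (\<Sum>j<d. f (x + int j)) + (\<Sum>j<n. f (x + int (d + j)))"
    by (rule sum_split_add)
  have e: "(\<Sum>j<n. f (x + int (d + j))) = (\<Sum>j<n. f (x + int d + int j))"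
    by (simp add: add.assoc)
  have "(\<Sum>j<n. f (x + int d + int j)) - (\<Sum>j<n. f (x + int j))
      = (\<Sum>j<d. f (x + int (n + j))) - (\<Sum>j<d. f (x + int j))"
    using S1 S2 e by (simp add: add.commute algebra_simps)
  also have "norm \<dots> \<le> norm (\<Sum>j<d. f (x + int (n + j))) + norm (\<Sum>j<d. f (x + int j))"
    by (rule norm_triangle_ineq4)
  also have "\<dots> \<le> real d * B + real d * B"
    using assms by (intro add_mono sum_card_bound) auto
  finally show ?thesis by (simp add: algebra_simps)
qed

lemma window_shift:
  fixes f :: "int \<Rightarrow> 'b::real_normed_vector"
  assumes "\<forall>t. norm (f t) \<le> B"
  shows "norm ((\<Sum>j<n. f (y + int j)) - (\<Sum>j<n. f (x + int j))) \<le> 2 * \<bar>real_of_int (y - x)\<bar> * B"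
proof (cases "x \<le> y")
  case True
  define d where "d = nat (y - x)"
  have y: "y = x + int d" using True by (simp add: d_def)
  show ?thesis using window_shift_nat[OF assms, where n=n and x=x and d=d] True by (simp add: y)
next
  case False
  define d where "d = nat (x - y)"
  have x: "x = y + int d" using False by (simp add: d_def)
  show ?thesis using window_shift_nat[OF assms, where n=n and x=y and d=d] False
    by (simp add: x norm_minus_commute)
qed

lemma avg_osc:
  fixes f :: "int \<Rightarrow> 'b::real_normed_vector"
  assumes "TB f" "e > 0"
  shows "\<exists>N\<ge>1. \<forall>n\<ge>N. \<forall>s s'. norm (avg f n s - avg f n s') \<le> e"
proof -
  obtain B where B: "B > 0" "\<forall>t. norm (f t) \<le> B" using TB_bounded_pos[OF assms(1)] by blast
  obtain R where R: "finite R" "\<forall>a. \<exists>r\<in>R. \<forall>t. norm (f (t + a) - f (t + r)) \<le> e/4"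
    using assms unfolding TB_def by (meson divide_pos_pos zero_less_numeral)
  define D where "D = Max (insert 0 ((\<lambda>r. \<bar>r\<bar>) ` R))"
  have D: "\<bar>r\<bar> \<le> D" if "r \<in> R" for r
    unfolding D_def using R(1) that by (intro Max_ge) auto
  have D0: "D \<ge> 0" unfolding D_def using R(1) by (intro Max_ge) auto
  define N where "N = nat \<lceil>8 * real_of_int D * B / e\<rceil> + 1"
  have N1: "N \<ge> 1" by (simp add: N_def)
  have approx: "\<exists>r\<in>R. norm ((\<Sum>j<n. f (s + int j)) - (\<Sum>j<n. f (r + int j))) \<le> real n * (e/4)" for n s
  proof -
    obtain r where r: "r \<in> R" "\<forall>t. norm (f (t + s) - f (t + r)) \<le> e/4" using R(2) by blast
    have "norm ((\<Sum>j<n. f (s + int j)) - (\<Sum>j<n. f (r + int j))) = norm (\<Sum>j<n. f (s + int j) - f (r + int j))"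
      by (simp add: sum_subtractf)
    also have "\<dots> \<le> real n * (e/4)"
    proof (rule sum_card_bound)
      fix j show "norm (f (s + int j) - f (r + int j)) \<le> e/4"
        using r(2)[rule_format, of "int j"] by (simp add: add.commute)
    qed
    finally show ?thesis using r(1) by blast
  qed
  have "norm (avg f n s - avg f n s') \<le> e" if n: "n \<ge> N" for n s s'
  proof -
    obtain r where r: "r \<in> R" "norm ((\<Sum>j<n. f (s + int j)) - (\<Sum>j<n. f (r + int j))) \<le> real n * (e/4)"
      using approx by blast
    obtain r' where r': "r' \<in> R" "norm ((\<Sum>j<n. f (s' + int j)) - (\<Sum>j<n. f (r' + int j))) \<le> real n * (e/4)"
      using approx by blast
    have rr: "norm ((\<Sum>j<n. f (r + int j)) - (\<Sum>j<n. f (r' + int j))) \<le> 2 * \<bar>real_of_int (r - r')\<bar> * B"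
      by (rule window_shift[OF B(2)])
    have "\<bar>real_of_int (r - r')\<bar> \<le> 2 * real_of_int D" using D[OF r(1)] D[OF r'(1)] by linarith
    hence rr': "norm ((\<Sum>j<n. f (r + int j)) - (\<Sum>j<n. f (r' + int j))) \<le> 4 * real_of_int D * B"
      using rr B(1) by (smt (verit) mult_right_mono)
    let ?S = "\<lambda>x. (\<Sum>j<n. f (x + int j))"
    have "norm (?S s - ?S s') \<le> norm (?S s - ?S r) + norm (?S r - ?S r') + norm (?S s' - ?S r')"
      using tri3[of "?S s" "?S s'" "?S r"] tri3[of "?S s'" "?S r" "?S r'"] by linarith
    also have "\<dots> \<le> real n * (e/4) + 4 * real_of_int D * B + real n * (e/4)"
      using r(2) rr' r'(2) by linarith
    also have "\<dots> = real n * (e/2) + 4 * real_of_int D * B" by (simp add: algebra_simps)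
    finally have tot: "norm (?S s - ?S s') \<le> real n * (e/2) + 4 * real_of_int D * B" .
    have npos: "real n > 0" using n N1 by simp
    have "8 * real_of_int D * B / e \<le> real N" unfolding N_def by linarith
    hence "8 * real_of_int D * B / e \<le> real n" using n by linarith
    hence "8 * real_of_int D * B \<le> real n * e" using assms(2) by (simp add: divide_le_eq)
    hence "real n * (e/2) + 4 * real_of_int D * B \<le> real n * e" by simp
    with tot have "norm (?S s - ?S s') \<le> real n * e" by linarith
    moreover have "avg f n s - avg f n s' = (?S s - ?S s') /\<^sub>R real n"
      unfolding avg_def by (simp add: scaleR_diff_right)
    ultimately have "norm (avg f n s - avg f n s') = norm (?S s - ?S s') / real n" "norm (?S s - ?S s') \<le> e * real n"
      by (simp_all add: divide_inverse mult.commute)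
    thus ?thesis using npos by (simp add: divide_le_eq)
  qed
  thus ?thesis using N1 by blast
qed

lemma sum_interval_shift: "(\<Sum>j\<in>{m..<m+n}. F j) = (\<Sum>j<n. F (m + j))" for m n :: nat
  by (induction n) simp_all

lemma avg_mult:
  fixes f :: "int \<Rightarrow> 'b::real_normed_vector"
  assumes "k > 0" "n > 0"
  shows "avg f (k * n) s = (\<Sum>i<k. avg f n (s + int (i * n))) /\<^sub>R real k"
proof -
  have "(\<Sum>j<k * n. f (s + int j)) = (\<Sum>i<k. \<Sum>j\<in>{i * n..<i * n + n}. f (s + int j))"
    by (rule sum.nat_group[symmetric])
  also have "\<dots> = (\<Sum>i<k. \<Sum>j<n. f (s + int (i * n) + int j))"
    by (simp add: sum_interval_shift add.assoc)
  finally have eq: "(\<Sum>j<k * n. f (s + int j)) = (\<Sum>i<k. \<Sum>j<n. f (s + int (i * n) + int j))" .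
  have "(\<Sum>i<k. avg f n (s + int (i * n))) /\<^sub>R real k
     = (inverse (real k) * inverse (real n)) *\<^sub>R (\<Sum>i<k. \<Sum>j<n. f (s + int (i * n) + int j))"
    unfolding avg_def by (simp add: scaleR_sum_right)
  also have "\<dots> = avg f (k * n) s"
    unfolding avg_def eq by (simp add: mult.commute)
  finally show ?thesis by simp
qed

lemma avg_mult_close:
  fixes f :: "int \<Rightarrow> 'b::real_normed_vector"
  assumes osc: "\<forall>s s'. norm (avg f n s - avg f n s') \<le> e" and "k > 0" "n > 0"
  shows "norm (avg f (k * n) s - avg f n s) \<le> e"
proof -
  have c: "(\<Sum>i<k. avg f n s) /\<^sub>R real k = avg f n s" using assms(2) by (simp add: sum_constant_scaleR)
  have "avg f (k * n) s - avg f n s = (\<Sum>i<k. avg f n (s + int (i * n)) - avg f n s) /\<^sub>R real k"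
    unfolding sum_subtractf scaleR_diff_right c by (simp add: avg_mult[OF assms(2,3)])
  also have "norm \<dots> = norm (\<Sum>i<k. avg f n (s + int (i * n)) - avg f n s) / real k"
    by (simp add: divide_inverse mult.commute)
  also have "\<dots> \<le> (real k * e) / real k"
    by (intro divide_right_mono sum_card_bound) (use osc in auto)
  also have "\<dots> = e" using assms(2) by simp
  finally show ?thesis .
qed

lemma avg_close:
  fixes f :: "int \<Rightarrow> 'b::real_normed_vector"
  assumes "TB f" "e > 0"
  shows "\<exists>N. \<forall>m\<ge>N. \<forall>n\<ge>N. \<forall>s. norm (avg f m s - avg f n s) \<le> e"
proof -
  obtain N where N: "N \<ge> 1" "\<forall>n\<ge>N. \<forall>s s'. norm (avg f n s - avg f n s') \<le> e/2"
    using avg_osc[OF assms(1), of "e/2"] assms(2) by auto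
  have "norm (avg f m s - avg f n s) \<le> e" if "m \<ge> N" "n \<ge> N" for m n s
  proof -
    have a: "norm (avg f (n * m) s - avg f m s) \<le> e/2"
      using N that by (intro avg_mult_close) auto
    have b: "norm (avg f (m * n) s - avg f n s) \<le> e/2"
      using N that by (intro avg_mult_close) auto
    have a': "norm (avg f (m * n) s - avg f m s) \<le> e/2" using a by (simp add: mult.commute)
    show ?thesis using tri3[of "avg f m s" "avg f n s" "avg f (m * n) s"] a' b
      norm_minus_commute[of "avg f m s" "avg f (m * n) s"] norm_minus_commute[of "avg f n s" "avg f (m * n) s"]
      by linarith
  qed
  thus ?thesis by blast
qed

lemma mean_exists:
  fixes f :: "int \<Rightarrow> 'b::banach"
  assumes "TB f"
  shows "\<exists>a. \<forall>e>0. \<exists>N. \<forall>n\<ge>N. \<forall>s. norm (avg f n s - a) \<le> e"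
proof -
  have "Cauchy (\<lambda>n. avg f n 0)"
  proof (rule CauchyI)
    fix e :: real assume "e > 0"
    then obtain N where N: "\<forall>m\<ge>N. \<forall>n\<ge>N. \<forall>s. norm (avg f m s - avg f n s) \<le> e/2"
      using avg_close[OF assms, of "e/2"] by auto
    show "\<exists>M. \<forall>m\<ge>M. \<forall>n\<ge>M. norm (avg f m 0 - avg f n 0) < e"
    proof (intro exI allI impI)
      fix m n assume "N \<le> m" "N \<le> n"
      hence "norm (avg f m 0 - avg f n 0) \<le> e/2" using N by blast
      thus "norm (avg f m 0 - avg f n 0) < e" using \<open>e > 0\<close> by linarith
    qed
  qed
  hence "convergent (\<lambda>n. avg f n 0)" by (simp add: Cauchy_convergent_iff)
  then obtain a where a: "(\<lambda>n. avg f n 0) \<longlonglongrightarrow> a"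
    unfolding convergent_def by blast
  have "\<exists>N. \<forall>n\<ge>N. \<forall>s. norm (avg f n s - a) \<le> e" if e: "e > 0" for e
  proof -
    obtain N1 where N1: "\<forall>m\<ge>N1. \<forall>n\<ge>N1. \<forall>s. norm (avg f m s - avg f n s) \<le> e/2"
      using avg_close[OF assms, of "e/2"] e by auto
    obtain N2 where N2: "N2 \<ge> 1" "\<forall>n\<ge>N2. \<forall>s s'. norm (avg f n s - avg f n s') \<le> e/2"
      using avg_osc[OF assms, of "e/2"] e by auto
    define N where "N = max N1 N2"
    have "norm (avg f n s - a) \<le> e" if "n \<ge> N" for n s
    proof (rule Lim_norm_ubound[of sequentially "\<lambda>m. avg f n s - avg f m 0"])
      show "((\<lambda>m. avg f n s - avg f m 0) \<longlongrightarrow> avg f n s - a) sequentially"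
        by (rule tendsto_diff[OF tendsto_const a])
      show "\<forall>\<^sub>F m in sequentially. norm (avg f n s - avg f m 0) \<le> e"
        unfolding eventually_sequentially
      proof (intro exI[of _ N] allI impI)
        fix m assume "m \<ge> N"
        hence "norm (avg f n 0 - avg f m 0) \<le> e/2" using N1 that unfolding N_def by simp
        moreover have "norm (avg f n s - avg f n 0) \<le> e/2" using N2 that unfolding N_def by simp
        ultimately show "norm (avg f n s - avg f m 0) \<le> e"
          using tri3[of "avg f n s" "avg f m 0" "avg f n 0"] norm_minus_commute[of "avg f m 0" "avg f n 0"] by linarith
      qed
    qed (rule trivial_limit_sequentially)
    thus ?thesis by blast
  qed
  thus ?thesis by blast
qed



lemma sq_mean_zero:
  fixes \<phi> :: "int \<Rightarrow> 'b::real_normed_vector"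
  assumes tb: "TB \<phi>" and lim: "(\<lambda>U. (\<Sum>u<U. (norm (\<phi> (int u)))\<^sup>2) / real U) \<longlonglongrightarrow> 0"
  shows "\<phi> t0 = 0"
proof (rule ccontr)
  assume nz: "\<phi> t0 \<noteq> 0"
  define c where "c = norm (\<phi> t0)"
  have c: "c > 0" using nz by (simp add: c_def)
  obtain R where R: "finite R" "\<forall>a. \<exists>r\<in>R. \<forall>t. norm (\<phi> (t + a) - \<phi> (t + r)) \<le> c/2"
    using tb c unfolding TB_def by (meson half_gt_zero)
  define D where "D = Max (insert 0 ((\<lambda>r. \<bar>r\<bar>) ` R))"
  have D: "\<bar>r\<bar> \<le> D" if "r \<in> R" for r
    unfolding D_def using R(1) that by (intro Max_ge) auto
  have D0: "D \<ge> 0" unfolding D_def using R(1) by (intro Max_ge) auto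
  define W where "W = nat (2 * D + 1)"
  have W1: "W \<ge> 1" using D0 by (simp add: W_def)
  have block: "\<exists>j<W. norm (\<phi> (int (i * W + j))) \<ge> c/2" for i
  proof -
    define a where "a = int (i * W) + D - t0"
    obtain r where r: "r \<in> R" "\<forall>t. norm (\<phi> (t + a) - \<phi> (t + r)) \<le> c/2" using R(2) by blast
    have "norm (\<phi> (t0 - r + a) - \<phi> (t0 - r + r)) \<le> c/2" using r(2) by blast
    hence h: "norm (\<phi> (t0 - r + a) - \<phi> t0) \<le> c/2" by simp
    have "norm (\<phi> t0) \<le> norm (\<phi> (t0 - r + a)) + norm (\<phi> (t0 - r + a) - \<phi> t0)"
      using norm_triangle_ineq4[of "\<phi> (t0 - r + a)" "\<phi> (t0 - r + a) - \<phi> t0"] by simp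
    hence big: "norm (\<phi> (t0 - r + a)) \<ge> c/2" using h unfolding c_def by linarith
    define j where "j = nat (D - r)"
    have rD: "\<bar>r\<bar> \<le> D" using D r(1) by blast
    have jW: "j < W" using rD D0 unfolding j_def W_def by linarith
    have "int (i * W + j) = t0 - r + a" using rD unfolding j_def a_def by simp
    thus ?thesis using big jW by metis
  qed
  have lower: "(\<Sum>u<k * W. (norm (\<phi> (int u)))\<^sup>2) \<ge> real k * (c/2)\<^sup>2" for k
  proof -
    have "(\<Sum>u<k * W. (norm (\<phi> (int u)))\<^sup>2) = (\<Sum>i<k. \<Sum>u\<in>{i * W..<i * W + W}. (norm (\<phi> (int u)))\<^sup>2)"
      by (rule sum.nat_group[symmetric])
    also have "\<dots> = (\<Sum>i<k. \<Sum>j<W. (norm (\<phi> (int (i * W + j))))\<^sup>2)"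
      by (simp add: sum_interval_shift)
    also have "\<dots> \<ge> (\<Sum>i<k. (c/2)\<^sup>2)"
    proof (rule sum_mono)
      fix i assume "i \<in> {..<k}"
      obtain j where j: "j < W" "norm (\<phi> (int (i * W + j))) \<ge> c/2" using block by blast
      have "(c/2)\<^sup>2 \<le> (norm (\<phi> (int (i * W + j))))\<^sup>2"
        using j(2) c by (intro power_mono) auto
      also have "\<dots> \<le> (\<Sum>j<W. (norm (\<phi> (int (i * W + j))))\<^sup>2)"
        using j(1) by (intro member_le_sum) auto
      finally show "(c/2)\<^sup>2 \<le> (\<Sum>j<W. (norm (\<phi> (int (i * W + j))))\<^sup>2)" .
    qed
    finally show ?thesis by simp
  qed
  define q where "q = (c/2)\<^sup>2 / real W"
  have q: "q > 0" using c W1 by (simp add: q_def)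
  obtain N where N: "\<forall>U\<ge>N. (\<Sum>u<U. (norm (\<phi> (int u)))\<^sup>2) / real U < q"
    using order_tendstoD(2)[OF lim q] unfolding eventually_sequentially by blast
  define k where "k = N + 1"
  have kW: "k * W \<ge> N" using W1 unfolding k_def by (metis le_add1 le_trans mult_le_mono2 nat_mult_1_right)
  have "(\<Sum>u<k * W. (norm (\<phi> (int u)))\<^sup>2) / real (k * W) \<ge> q"
  proof -
    have "k * W > 0" using W1 by (simp add: k_def)
    hence pos: "real (k * W) > 0" by linarith
    have "q * real (k * W) = real k * (c/2)\<^sup>2" using W1 by (simp add: q_def)
    also have "\<dots> \<le> (\<Sum>u<k * W. (norm (\<phi> (int u)))\<^sup>2)" by (rule lower)
    finally show ?thesis using pos by (simp add: le_divide_eq)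
  qed
  with N kW show False by (meson not_less)
qed

lemma cis_ne_1:
  assumes "0 < \<bar>x\<bar>" "\<bar>x\<bar> < 2 * pi"
  shows "cis x \<noteq> 1"
proof
  assume "cis x = 1"
  hence "cos x = 1" by (simp add: complex_eq_iff)
  then obtain n :: int where n: "x = n * 2 * pi" by (auto simp: cos_one_2pi_int)
  show False
  proof (cases "n = 0")
    case True thus False using n assms by simp
  next
    case False
    hence "\<bar>real_of_int n\<bar> \<ge> 1" by linarith
    hence "\<bar>x\<bar> \<ge> 2 * pi" using n pi_gt_zero by (simp add: abs_mult)
    thus False using assms by simp
  qed
qed

lemma sum_cis_geom:
  assumes "cis x \<noteq> 1"
  shows "norm (\<Sum>j<n. cis (x * real j)) \<le> 2 / norm (cis x - 1)"
proof -
  have "(\<Sum>j<n. cis (x * real j)) = (\<Sum>j<n. (cis x) ^ j)"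
    by (simp add: Complex.DeMoivre mult.commute)
  also have "\<dots> = ((cis x) ^ n - 1) / (cis x - 1)" by (rule geometric_sum[OF assms])
  finally have eq: "(\<Sum>j<n. cis (x * real j)) = ((cis x) ^ n - 1) / (cis x - 1)" .
  have "norm ((cis x) ^ n - 1) \<le> norm ((cis x) ^ n) + norm (1::complex)" by (rule norm_triangle_ineq4)
  also have "\<dots> = 2" by (simp add: norm_power)
  finally have "norm ((cis x) ^ n - 1) \<le> 2" .
  thus ?thesis unfolding eq norm_divide using assms by (simp add: divide_right_mono)
qed

lemma sum_cis_roots:
  fixes L :: nat and m :: int
  assumes "L > 0" "\<bar>m\<bar> < int L"
  shows "(\<Sum>j<L. cis (2 * pi * real j * real_of_int m / real L)) = (if m = 0 then of_nat L else 0)"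
proof (cases "m = 0")
  case True thus ?thesis by simp
next
  case False
  define x where "x = 2 * pi * real_of_int m / real L"
  have "\<bar>x\<bar> = 2 * pi * \<bar>real_of_int m\<bar> / real L" using assms(1) by (simp add: x_def abs_mult)
  moreover have "\<bar>real_of_int m\<bar> < real L" using assms(2) by linarith
  moreover have "\<bar>real_of_int m\<bar> > 0" using False by simp
  ultimately have x: "0 < \<bar>x\<bar>" "\<bar>x\<bar> < 2 * pi" using assms(1) by (auto simp: divide_less_eq)
  have z: "cis x \<noteq> 1" by (rule cis_ne_1[OF x])
  have "(\<Sum>j<L. cis (2 * pi * real j * real_of_int m / real L)) = (\<Sum>j<L. (cis x) ^ j)"
    by (simp add: Complex.DeMoivre x_def mult.commute mult.left_commute)
  also have "\<dots> = ((cis x) ^ L - 1) / (cis x - 1)" by (rule geometric_sum[OF z])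
  also have "(cis x) ^ L = cis (2 * pi * real_of_int m)"
    using assms(1) by (simp add: Complex.DeMoivre x_def)
  also have "\<dots> = 1" by (rule cis_multiple_2pi) simp
  finally show ?thesis using False by simp
qed



lemma avg_norm_le:
  assumes "\<And>t. norm (f t) \<le> c"
  shows "norm (avg f n s) \<le> c"
proof (cases "n = 0")
  case True
  have "0 \<le> c" using assms[of 0] norm_ge_zero order_trans by blast
  thus ?thesis using True by (simp add: avg_def)
next
  case False
  have "norm (\<Sum>j<n. f (s + int j)) \<le> real n * c" by (rule sum_card_bound) (use assms in auto)
  moreover have "norm (avg f n s) = norm (\<Sum>j<n. f (s + int j)) / real n"
    by (simp add: avg_def divide_inverse mult.commute)
  ultimately show ?thesis using False by (simp add: divide_le_eq mult.commute)
qed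

lemma avg_complex: "avg (f :: int \<Rightarrow> complex) n s = (\<Sum>j<n. f (s + int j)) / of_nat n"
  unfolding avg_def by (simp add: scaleR_conv_of_real divide_inverse mult.commute)

lemma unif_tendsto:
  assumes "\<forall>e>0. \<exists>N. \<forall>n\<ge>N. norm (X n - a) \<le> e"
  shows "X \<longlonglongrightarrow> a"
proof (rule LIMSEQ_I)
  fix r :: real assume "r > 0"
  then obtain N where N: "\<forall>n\<ge>N. norm (X n - a) \<le> r/2" using assms half_gt_zero by blast
  show "\<exists>N. \<forall>n\<ge>N. norm (X n - a) < r"
  proof (intro exI allI impI)
    fix n assume "n \<ge> N" thus "norm (X n - a) < r" using N \<open>r > 0\<close> by force
  qed
qed

lemma mean_uniform:
  fixes f :: "int \<Rightarrow> 'b::banach"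
  assumes "TB f" "(\<lambda>n. avg f n 0) \<longlonglongrightarrow> a"
  shows "\<forall>e>0. \<exists>N. \<forall>n\<ge>N. \<forall>s. norm (avg f n s - a) \<le> e"
proof -
  obtain a' where a': "\<forall>e>0. \<exists>N. \<forall>n\<ge>N. \<forall>s. norm (avg f n s - a') \<le> e"
    using mean_exists[OF assms(1)] by blast
  have "(\<lambda>n. avg f n 0) \<longlonglongrightarrow> a'"
    by (rule unif_tendsto) (use a' in blast)
  hence "a = a'" using assms(2) LIMSEQ_unique by blast
  thus ?thesis using a' by simp
qed

lemma mean_conv:
  fixes f :: "int \<Rightarrow> 'b::banach"
  assumes "TB f" shows "(\<lambda>n. avg f n 0) \<longlonglongrightarrow> lim (\<lambda>n. avg f n 0)"
proof -
  obtain a where a': "\<forall>e>0. \<exists>N. \<forall>n\<ge>N. \<forall>s. norm (avg f n s - a) \<le> e"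
    using mean_exists[OF assms(1)] by blast
  have "(\<lambda>n. avg f n 0) \<longlonglongrightarrow> a"
    by (rule unif_tendsto) (use a' in blast)
  thus ?thesis by (simp add: limI)
qed

lemma sum_helper:
  fixes a :: "'i \<Rightarrow> 'j \<Rightarrow> complex"
  shows "(\<Sum>u\<in>A. \<Sum>t\<in>B. a u t * c u) / (x * y) = (\<Sum>u\<in>A. (\<Sum>t\<in>B. a u t) / y * c u) / x"
proof -
  have "(\<Sum>t\<in>B. a u t) / y * c u = (\<Sum>t\<in>B. a u t * c u) / y" for u
    by (simp add: sum_distrib_right)
  hence "(\<Sum>u\<in>A. (\<Sum>t\<in>B. a u t) / y * c u) = (\<Sum>u\<in>A. \<Sum>t\<in>B. a u t * c u) / y"
    by (simp add: sum_divide_distrib)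
  thus ?thesis by (simp add: mult.commute)
qed

lemma embed_ok:
  fixes w :: "nat \<Rightarrow> real"
  assumes nn: "\<And>j. w j \<ge> 0" and supp: "\<And>j. j \<ge> L \<Longrightarrow> w j = 0" and one: "(\<Sum>j<L. w j) = 1"
  shows "(\<integral>\<^sup>+x. ennreal (w x) \<partial>count_space UNIV) = 1"
proof -
  have "(\<integral>\<^sup>+x. ennreal (w x) \<partial>count_space UNIV) = (\<Sum>x\<in>{..<L}. ennreal (w x))"
    by (rule nn_integral_count_space') (use supp in auto)
  also have "\<dots> = ennreal (\<Sum>x<L. w x)" using nn by simp
  finally show ?thesis using one by simp
qed

lemma embed_integral:
  fixes w :: "nat \<Rightarrow> real" and f :: "real \<Rightarrow> 'x::{banach,second_countable_topology}"
  assumes nn: "\<And>j. w j \<ge> 0" and supp: "\<And>j. j \<ge> L \<Longrightarrow> w j = 0" and one: "(\<Sum>j<L. w j) = 1"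
    and f: "f \<in> borel_measurable borel"
  shows "integral\<^sup>L (distr (measure_pmf (embed_pmf w)) borel th) f = (\<Sum>j<L. w j *\<^sub>R f (th j))"
proof -
  note ok = embed_ok[OF nn supp one]
  have "integral\<^sup>L (distr (measure_pmf (embed_pmf w)) borel th) f = integral\<^sup>L (measure_pmf (embed_pmf w)) (\<lambda>x. f (th x))"
    by (rule integral_distr) (simp_all add: f)
  also have "\<dots> = (\<Sum>a\<in>{..<L}. pmf (embed_pmf w) a *\<^sub>R f (th a))"
  proof (rule integral_measure_pmf)
    fix a assume "a \<in> set_pmf (embed_pmf w)"
    hence "w a \<noteq> 0" using set_embed_pmf[of w, OF nn ok] by auto
    thus "a \<in> {..<L}" using supp by (meson lessThan_iff not_less)
  qed simp
  also have "\<dots> = (\<Sum>j<L. w j *\<^sub>R f (th j))"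
    using pmf_embed_pmf[of w, OF nn ok] by simp
  finally show ?thesis .
qed

lemma embed_real_distribution:
  fixes w :: "nat \<Rightarrow> real"
  assumes nn: "\<And>j. w j \<ge> 0" and supp: "\<And>j. j \<ge> L \<Longrightarrow> w j = 0" and one: "(\<Sum>j<L. w j) = 1"
  shows "real_distribution (distr (measure_pmf (embed_pmf w)) borel th)"
proof -
  have "prob_space (distr (measure_pmf (embed_pmf w)) borel th)"
    by (rule prob_space.prob_space_distr[OF prob_space_measure_pmf]) simp
  thus ?thesis unfolding real_distribution_def real_distribution_axioms_def by simp
qed

lemma cis_borel: "(\<lambda>x::real. cis (a * x)) \<in> borel_measurable borel"
  by (intro borel_measurable_continuous_onI continuous_intros)

lemma isCont_cis_lin: "isCont (\<lambda>x::real. cis (c * x)) x"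
proof -
  have "continuous_on UNIV (\<lambda>x::real. cis (c * x))" by (intro continuous_intros)
  thus ?thesis by (simp add: continuous_on_eq_continuous_at)
qed

lemma roots2:
  fixes T :: nat and m :: int
  assumes "T > 0" "\<bar>m\<bar> < 2 * int T"
  shows "(\<Sum>j<2*T. cis (pi * real j / real T * real_of_int m)) = (if m = 0 then of_nat (2*T) else 0)"
proof -
  have "(\<Sum>j<2*T. cis (pi * real j / real T * real_of_int m))
      = (\<Sum>j<2*T. cis (2 * pi * real j * real_of_int m / real (2*T)))"
    using assms(1) by (intro sum.cong refl arg_cong[where f=cis]) (simp add: field_simps)
  also have "\<dots> = (if m = 0 then of_nat (2*T) else 0)"
    using assms by (intro sum_cis_roots) auto
  finally show ?thesis .
qed

lemma sum_if_less:
  fixes m n :: nat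
  assumes "m \<le> n"
  shows "(\<Sum>i<n. if i < m then F i else 0) = (\<Sum>i<m. F i)"
proof -
  have "(\<Sum>i<n. if i < m then F i else 0) = (\<Sum>i\<in>{i\<in>{..<n}. i < m}. F i)"
    by (rule sum.inter_filter[OF finite_lessThan, symmetric])
  also have "{i\<in>{..<n}. i < m} = {..<m}" using assms by auto
  finally show ?thesis .
qed

context
  fixes g :: "int \<Rightarrow> complex"
  assumes tbg: "TB g"
  and hyp: "\<And>l. (\<lambda>n. avg (\<lambda>t. g t * cis (- (l * real_of_int t))) n 0) \<longlonglongrightarrow> 0"
begin

definition hh :: "int \<Rightarrow> complex" where
  "hh u = lim (\<lambda>T. avg (\<lambda>t. g (t + u) * cnj (g t)) T 0)"

lemma TB_F: "TB (\<lambda>t. g (t + u) * cnj (g t))"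
  by (intro TB_mult TB_shift TB_cnj tbg)

lemma hh_lim: "(\<lambda>T. avg (\<lambda>t. g (t + u) * cnj (g t)) T 0) \<longlonglongrightarrow> hh u"
  unfolding hh_def by (rule mean_conv[OF TB_F])

lemma g_bound: "\<exists>B>0. \<forall>t. norm (g t) \<le> B"
  by (rule TB_bounded_pos[OF tbg])

lemma hh_bound: "\<exists>C>0. \<forall>u. norm (hh u) \<le> C"
proof -
  obtain B where B: "B > 0" "\<forall>t. norm (g t) \<le> B" using g_bound by blast
  have "norm (hh u) \<le> B * B" for u
  proof (rule Lim_norm_ubound[OF _ hh_lim])
    show "\<forall>\<^sub>F T in sequentially. norm (avg (\<lambda>t. g (t + u) * cnj (g t)) T 0) \<le> B * B"
    proof (intro always_eventually allI avg_norm_le)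
      fix T t
      show "norm (g (t + u) * cnj (g t)) \<le> B * B"
        unfolding norm_mult complex_mod_cnj using B by (intro mult_mono) auto
    qed
  qed simp
  thus ?thesis using B(1) by (intro exI[of _ "B * B"]) auto
qed

lemma TB_hh: "TB hh"
  unfolding TB_def
proof (intro allI impI)
  fix e :: real assume e: "e > 0"
  obtain B where B: "B > 0" "\<forall>t. norm (g t) \<le> B" using g_bound by blast
  obtain R where R: "finite R" "\<forall>a. \<exists>r\<in>R. \<forall>t. norm (g (t + a) - g (t + r)) \<le> e / B"
    using tbg e B(1) unfolding TB_def by (meson divide_pos_pos)
  have "\<exists>r\<in>R. \<forall>t. norm (hh (t + a) - hh (t + r)) \<le> e" for a
  proof -
    obtain r where r: "r \<in> R" "\<forall>t. norm (g (t + a) - g (t + r)) \<le> e / B" using R(2) by blast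
    have "norm (hh (t + a) - hh (t + r)) \<le> e" for t
    proof (rule Lim_norm_ubound[OF _ tendsto_diff[OF hh_lim hh_lim]])
      show "\<forall>\<^sub>F T in sequentially. norm (avg (\<lambda>x. g (x + (t + a)) * cnj (g x)) T 0
               - avg (\<lambda>x. g (x + (t + r)) * cnj (g x)) T 0) \<le> e"
      proof (intro always_eventually allI)
        fix T
        have eq: "avg (\<lambda>x. g (x + (t + a)) * cnj (g x)) T 0 - avg (\<lambda>x. g (x + (t + r)) * cnj (g x)) T 0
              = avg (\<lambda>x. (g (x + t + a) - g (x + t + r)) * cnj (g x)) T 0"
          unfolding avg_complex by (simp add: diff_divide_distrib sum_subtractf algebra_simps)
        have "norm (avg (\<lambda>x. (g (x + t + a) - g (x + t + r)) * cnj (g x)) T 0) \<le> e / B * B"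
        proof (rule avg_norm_le)
          fix x
          show "norm ((g (x + t + a) - g (x + t + r)) * cnj (g x)) \<le> e / B * B"
            unfolding norm_mult complex_mod_cnj
            using r(2)[rule_format, of "x + t"] B e by (intro mult_mono) auto
        qed
        thus "norm (avg (\<lambda>x. g (x + (t + a)) * cnj (g x)) T 0
               - avg (\<lambda>x. g (x + (t + r)) * cnj (g x)) T 0) \<le> e"
          unfolding eq using B(1) by simp
      qed
    qed simp
    thus ?thesis using r(1) by blast
  qed
  thus "\<exists>R. finite R \<and> (\<forall>a. \<exists>r\<in>R. \<forall>t. norm (hh (t + a) - hh (t + r)) \<le> e)" using R(1) by blast
qed


lemma hh_coeff: "(\<lambda>U. avg (\<lambda>u. hh u * cis (- (l * real_of_int u))) U 0) \<longlonglongrightarrow> 0"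
proof -
  define G where "G = (\<lambda>x. g x * cis (- (l * real_of_int x)))"
  have "TB (\<lambda>t. g t * cis ((- l) * real_of_int t))" by (intro TB_mult tbg TB_cis)
  hence tbG: "TB G" unfolding G_def by simp
  have unif: "\<forall>e>0. \<exists>N. \<forall>n\<ge>N. \<forall>s. norm (avg G n s - 0) \<le> e"
    by (rule mean_uniform[OF tbG]) (use hyp[of l] in \<open>simp add: G_def\<close>)
  obtain B where B: "B > 0" "\<forall>t. norm (g t) \<le> B" using g_bound by blast
  show ?thesis
  proof (rule unif_tendsto, intro allI impI)
    fix e :: real assume e: "e > 0"
    obtain N where N: "\<forall>n\<ge>N. \<forall>s. norm (avg G n s - 0) \<le> e / B"
      using unif e B(1) by (meson divide_pos_pos)
    have "norm (avg (\<lambda>u. hh u * cis (- (l * real_of_int u))) U 0 - 0) \<le> e" if U: "U \<ge> N" for U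
    proof -
      define Q where "Q = (\<lambda>T. avg (\<lambda>t. cnj (g t) * cis (l * real_of_int t) * avg G U t) T 0)"
      have termeq: "cnj (g t) * cis (l * real_of_int t) * (g (t + int u) * cis (- (l * real_of_int (t + int u))))
          = g (t + int u) * cnj (g t) * cis (- (l * real_of_int (int u)))" for t u
      proof -
        have c: "cis (l * real_of_int t) * cis (- (l * real_of_int (t + int u))) = cis (- (l * real_of_int (int u)))"
          by (simp add: cis_mult algebra_simps)
        have "cnj (g t) * cis (l * real_of_int t) * (g (t + int u) * cis (- (l * real_of_int (t + int u))))
            = g (t + int u) * cnj (g t) * (cis (l * real_of_int t) * cis (- (l * real_of_int (t + int u))))"
          by (simp add: ac_simps)
        thus ?thesis unfolding c .
      qed
      have Qeq: "Q T = (\<Sum>u<U. avg (\<lambda>t. g (t + int u) * cnj (g t)) T 0 * cis (- (l * real_of_int (int u)))) / of_nat U" for T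
      proof -
        have "Q T = (\<Sum>t<T. \<Sum>u<U. cnj (g (int t)) * cis (l * real_of_int (int t)) * (g (int t + int u) * cis (- (l * real_of_int (int t + int u))))) / (of_nat U * of_nat T)"
          unfolding Q_def avg_complex G_def by (simp add: sum_distrib_left sum_divide_distrib)
        also have "\<dots> = (\<Sum>t<T. \<Sum>u<U. g (int t + int u) * cnj (g (int t)) * cis (- (l * real_of_int (int u)))) / (of_nat U * of_nat T)"
          by (simp only: termeq)
        also have "\<dots> = (\<Sum>u<U. \<Sum>t<T. g (int t + int u) * cnj (g (int t)) * cis (- (l * real_of_int (int u)))) / (of_nat U * of_nat T)"
          by (subst sum.swap) (rule refl)
        also have "\<dots> = (\<Sum>u<U. avg (\<lambda>t. g (t + int u) * cnj (g t)) T 0 * cis (- (l * real_of_int (int u)))) / of_nat U"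
          unfolding avg_complex by (simp add: sum_helper)
        finally show ?thesis .
      qed
      have tgt: "avg (\<lambda>u. hh u * cis (- (l * real_of_int u))) U 0
          = (\<Sum>u<U. hh (int u) * cis (- (l * real_of_int (int u)))) / of_nat U"
        by (simp add: avg_complex)
      have lim: "Q \<longlonglongrightarrow> avg (\<lambda>u. hh u * cis (- (l * real_of_int u))) U 0"
        unfolding Qeq tgt divide_inverse
        by (intro tendsto_mult_right tendsto_sum hh_lim)
      have "norm (avg (\<lambda>u. hh u * cis (- (l * real_of_int u))) U 0) \<le> e"
      proof (rule Lim_norm_ubound[OF _ lim])
        show "\<forall>\<^sub>F T in sequentially. norm (Q T) \<le> e"
        proof (intro always_eventually allI)
          fix T
          have "norm (Q T) \<le> B * (e / B)" unfolding Q_def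
          proof (rule avg_norm_le)
            fix t
            have "norm (avg G U t) \<le> e / B" using N U by simp
            thus "norm (cnj (g t) * cis (l * real_of_int t) * avg G U t) \<le> B * (e / B)"
            proof -
              have "norm (g t) * norm (avg G U t) \<le> B * (e / B)"
                using B \<open>norm (avg G U t) \<le> e / B\<close> by (intro mult_mono) auto
              thus ?thesis unfolding norm_mult complex_mod_cnj by simp
            qed
          qed
          thus "norm (Q T) \<le> e" using B(1) by simp
        qed
      qed simp
      thus ?thesis by simp
    qed
    thus "\<exists>N. \<forall>U\<ge>N. norm (avg (\<lambda>u. hh u * cis (- (l * real_of_int u))) U 0 - 0) \<le> e" by blast
  qed
qed


definition zz :: "nat \<Rightarrow> real \<Rightarrow> complex" where
  "zz T th = (\<Sum>t<T. g (int t) * cis (- (th * real t)))"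

lemma ptw:
  "cis (real k * th) * of_real ((norm (zz T th))\<^sup>2)
   = (\<Sum>t<T. \<Sum>t'<T. g (int t) * cnj (g (int t')) * cis (th * real_of_int (int k - int t + int t')))"
proof -
  have "of_real ((norm (zz T th))\<^sup>2) = zz T th * cnj (zz T th)" by (rule complex_norm_square)
  also have "\<dots> = (\<Sum>t<T. \<Sum>t'<T. (g (int t) * cis (- (th * real t))) * (cnj (g (int t')) * cis (th * real t')))"
    unfolding zz_def cnj_sum by (simp add: sum_product cis_cnj)
  finally have "cis (real k * th) * of_real ((norm (zz T th))\<^sup>2)
      = (\<Sum>t<T. \<Sum>t'<T. cis (real k * th) * ((g (int t) * cis (- (th * real t))) * (cnj (g (int t')) * cis (th * real t'))))"
    by (simp add: sum_distrib_left)
  also have "\<dots> = (\<Sum>t<T. \<Sum>t'<T. g (int t) * cnj (g (int t')) * cis (th * real_of_int (int k - int t + int t')))"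
  proof (intro sum.cong refl)
    fix t t'
    have "cis (real k * th) * ((g (int t) * cis (- (th * real t))) * (cnj (g (int t')) * cis (th * real t')))
        = g (int t) * cnj (g (int t')) * (cis (real k * th) * cis (- (th * real t)) * cis (th * real t'))"
      by (simp add: ac_simps)
    also have "cis (real k * th) * cis (- (th * real t)) * cis (th * real t') = cis (th * real_of_int (int k - int t + int t'))"
      by (simp add: cis_mult algebra_simps)
    finally show "cis (real k * th) * ((g (int t) * cis (- (th * real t))) * (cnj (g (int t')) * cis (th * real t')))
        = g (int t) * cnj (g (int t')) * cis (th * real_of_int (int k - int t + int t'))" .
  qed
  finally show ?thesis .
qed

lemma KI:
  assumes "k < T"
  shows "(\<Sum>j<2*T. cis (real k * (pi * real j / real T)) * of_real ((norm (zz T (pi * real j / real T)))\<^sup>2))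
       = of_nat (2*T) * (\<Sum>t<T-k. g (int t + int k) * cnj (g (int t)))"
proof -
  have T: "T > 0" using assms by simp
  have "(\<Sum>j<2*T. cis (real k * (pi * real j / real T)) * of_real ((norm (zz T (pi * real j / real T)))\<^sup>2))
      = (\<Sum>j<2*T. \<Sum>t<T. \<Sum>t'<T. g (int t) * cnj (g (int t')) * cis (pi * real j / real T * real_of_int (int k - int t + int t')))"
    by (simp only: ptw)
  also have "\<dots> = (\<Sum>t<T. \<Sum>t'<T. \<Sum>j<2*T. g (int t) * cnj (g (int t')) * cis (pi * real j / real T * real_of_int (int k - int t + int t')))"
    by (subst sum.swap, subst (2) sum.swap) (rule refl)
  also have "\<dots> = (\<Sum>t<T. \<Sum>t'<T. g (int t) * cnj (g (int t')) * (if t = t' + k then of_nat (2*T) else 0))"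
  proof (intro sum.cong refl)
    fix t t' assume "t \<in> {..<T}" "t' \<in> {..<T}"
    hence m: "\<bar>int k - int t + int t'\<bar> < 2 * int T" using assms by auto
    have "(\<Sum>j<2*T. g (int t) * cnj (g (int t')) * cis (pi * real j / real T * real_of_int (int k - int t + int t')))
        = g (int t) * cnj (g (int t')) * (\<Sum>j<2*T. cis (pi * real j / real T * real_of_int (int k - int t + int t')))"
      by (simp add: sum_distrib_left)
    also have "\<dots> = g (int t) * cnj (g (int t')) * (if int k - int t + int t' = 0 then of_nat (2*T) else 0)"
      by (simp only: roots2[OF T m])
    also have "(int k - int t + int t' = 0) = (t = t' + k)" by linarith
    finally show "(\<Sum>j<2*T. g (int t) * cnj (g (int t')) * cis (pi * real j / real T * real_of_int (int k - int t + int t')))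
        = g (int t) * cnj (g (int t')) * (if t = t' + k then of_nat (2*T) else 0)" .
  qed
  also have "\<dots> = (\<Sum>t'<T. \<Sum>t<T. if t = t' + k then g (int t) * cnj (g (int t')) * of_nat (2*T) else 0)"
    by (subst sum.swap) (intro sum.cong refl, simp)
  also have "\<dots> = (\<Sum>t'<T. if t' < T - k then g (int t' + int k) * cnj (g (int t')) * of_nat (2*T) else 0)"
  proof (intro sum.cong refl)
    fix t' assume "t' \<in> {..<T}"
    show "(\<Sum>t<T. if t = t' + k then g (int t) * cnj (g (int t')) * of_nat (2*T) else 0)
        = (if t' < T - k then g (int t' + int k) * cnj (g (int t')) * of_nat (2*T) else 0)"
      by (subst sum.delta[OF finite_lessThan]) auto
  qed
  also have "\<dots> = (\<Sum>t'<T - k. g (int t' + int k) * cnj (g (int t')) * of_nat (2*T))"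
    by (rule sum_if_less) simp
  also have "\<dots> = of_nat (2*T) * (\<Sum>t<T-k. g (int t + int k) * cnj (g (int t)))"
    by (simp add: sum_distrib_left mult.commute)
  finally show ?thesis .
qed


definition cT :: "nat \<Rightarrow> nat \<Rightarrow> complex" where
  "cT T k = (\<Sum>t<T-k. g (int t + int k) * cnj (g (int t))) / of_nat T"

definition Sr :: "nat \<Rightarrow> real" where
  "Sr T = (\<Sum>t<T. (norm (g (int t)))\<^sup>2) / real T"

lemma cT0: "cT T 0 = of_real (Sr T)"
proof -
  have "cT T 0 = (\<Sum>t<T. g (int t) * cnj (g (int t))) / of_nat T" by (simp add: cT_def)
  also have "\<dots> = (\<Sum>t<T. complex_of_real ((norm (g (int t)))\<^sup>2)) / of_nat T"
    by (simp only: complex_norm_square)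
  also have "\<dots> = of_real (Sr T)" unfolding Sr_def of_real_divide of_real_sum by simp
  finally show ?thesis .
qed

lemma cT_lim: "(\<lambda>T. cT T k) \<longlonglongrightarrow> hh (int k)"
proof -
  obtain B where B: "B > 0" "\<forall>t. norm (g t) \<le> B" using g_bound by blast
  define X where "X = (\<lambda>t::nat. g (int t + int k) * cnj (g (int t)))"
  have Xb: "norm (X t) \<le> B * B" for t
    unfolding X_def norm_mult complex_mod_cnj using B by (intro mult_mono) auto
  have avgeq: "avg (\<lambda>t. g (t + int k) * cnj (g t)) T 0 = (\<Sum>t<T. X t) / of_nat T" for T
    by (simp add: avg_complex X_def)
  define D where "D = (\<lambda>T. avg (\<lambda>t. g (t + int k) * cnj (g t)) T 0 - cT T k)"
  have Db: "norm (D T) \<le> (real k * (B * B)) / real T" if "T \<ge> k" for T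
  proof -
    have split: "(\<Sum>t<T. X t) = (\<Sum>t<T-k. X t) + (\<Sum>i<k. X (T - k + i))"
      using sum_split_add[of X "T - k" k] that by simp
    have "D T = (\<Sum>t<T. X t) / of_nat T - (\<Sum>t<T-k. X t) / of_nat T"
      unfolding D_def avgeq cT_def X_def by simp
    also have "\<dots> = (\<Sum>i<k. X (T - k + i)) / of_nat T"
      unfolding split by (simp add: add_divide_distrib)
    also have "norm \<dots> = norm (\<Sum>i<k. X (T - k + i)) / real T" by (simp add: norm_divide)
    also have "\<dots> \<le> (real k * (B * B)) / real T"
      by (intro divide_right_mono sum_card_bound Xb) simp
    finally show ?thesis .
  qed
  have "D \<longlonglongrightarrow> 0"
  proof (rule Lim_null_comparison)
    show "\<forall>\<^sub>F T in sequentially. norm (D T) \<le> (real k * (B * B)) / real T"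
      unfolding eventually_sequentially using Db by blast
    show "(\<lambda>T. (real k * (B * B)) / real T) \<longlonglongrightarrow> 0" by (rule lim_const_over_n)
  qed
  hence "(\<lambda>T. avg (\<lambda>t. g (t + int k) * cnj (g t)) T 0 - D T) \<longlonglongrightarrow> hh (int k) - 0"
    by (intro tendsto_diff hh_lim)
  thus ?thesis unfolding D_def by simp
qed

lemma Sr_lim: "Sr \<longlonglongrightarrow> Re (hh 0)" and hh0: "hh 0 = of_real (Re (hh 0))"
proof -
  have l: "(\<lambda>T. complex_of_real (Sr T)) \<longlonglongrightarrow> hh 0"
    using cT_lim[of 0] by (simp add: cT0)
  have "(\<lambda>T. Re (complex_of_real (Sr T))) \<longlonglongrightarrow> Re (hh 0)" by (intro tendsto_Re l)
  thus "Sr \<longlonglongrightarrow> Re (hh 0)" by simp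
  have "(\<lambda>T. Im (complex_of_real (Sr T))) \<longlonglongrightarrow> Im (hh 0)" by (intro tendsto_Im l)
  hence "Im (hh 0) = 0" by (simp add: LIMSEQ_const_iff)
  thus "hh 0 = of_real (Re (hh 0))" by (simp add: complex_eq_iff)
qed


lemma spectral:
  assumes Spos: "Re (hh 0) > 0"
  shows "\<exists>\<mu>. real_distribution \<mu> \<and> (\<forall>k::nat. integral\<^sup>L \<mu> (\<lambda>x. cis (real k * x)) = hh (int k) / of_real (Re (hh 0)))"
proof -
  define S where "S = Re (hh 0)"
  have S: "S > 0" using Spos by (simp add: S_def)
  obtain T1 where T1: "\<forall>T\<ge>T1. Sr T > S/2"
    using order_tendstoD(1)[OF Sr_lim, of "S/2"] S unfolding S_def eventually_sequentially by auto
  define T0 where "T0 = T1 + 1"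
  define Tn where "Tn n = n + T0" for n
  have Tn1: "Tn n \<ge> 1" for n by (simp add: Tn_def T0_def)
  have SrT: "Sr (Tn n) > 0" for n
  proof -
    have "Tn n \<ge> T1" by (simp add: Tn_def T0_def)
    hence "Sr (Tn n) > S/2" using T1 by blast
    thus ?thesis using S by linarith
  qed
  define th where "th n j = pi * real j / real (Tn n)" for n j
  define PP where "PP n j = (norm (zz (Tn n) (th n j)))\<^sup>2" for n j
  define w where "w n j = (if j < 2 * Tn n then PP n j / (real (2 * Tn n) * real (Tn n) * Sr (Tn n)) else 0)" for n j
  have cTmul: "(\<Sum>t<T-k. g (int t + int k) * cnj (g (int t))) = of_nat T * cT T k" if "T \<ge> 1" for T k
    using that by (simp add: cT_def)
  have KIn: "(\<Sum>j<2 * Tn n. cis (real k * th n j) * of_real (PP n j)) = of_nat (2 * Tn n) * (of_nat (Tn n) * cT (Tn n) k)"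
    if "k < Tn n" for n k
    unfolding th_def PP_def using KI[OF that] cTmul[OF Tn1] by simp
  have sumPP: "(\<Sum>j<2 * Tn n. PP n j) = real (2 * Tn n) * real (Tn n) * Sr (Tn n)" for n
  proof -
    have "complex_of_real (\<Sum>j<2 * Tn n. PP n j) = (\<Sum>j<2 * Tn n. cis (real 0 * th n j) * of_real (PP n j))"
      by simp
    also have "\<dots> = of_nat (2 * Tn n) * (of_nat (Tn n) * cT (Tn n) 0)"
      by (rule KIn) (use Tn1[of n] in simp)
    also have "\<dots> = complex_of_real (real (2 * Tn n) * real (Tn n) * Sr (Tn n))"
      by (simp add: cT0)
    finally show ?thesis by (simp only: of_real_eq_iff)
  qed
  have nn: "w n j \<ge> 0" for n j
    using SrT[of n] unfolding w_def PP_def by simp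
  have supp: "j \<ge> 2 * Tn n \<Longrightarrow> w n j = 0" for n j unfolding w_def by simp
  have one: "(\<Sum>j<2 * Tn n. w n j) = 1" for n
  proof -
    have "(\<Sum>j<2 * Tn n. w n j) = (\<Sum>j<2 * Tn n. PP n j) / (real (2 * Tn n) * real (Tn n) * Sr (Tn n))"
      unfolding w_def by (simp add: sum_divide_distrib)
    also have "\<dots> = 1" unfolding sumPP using SrT[of n] Tn1[of n] by simp
    finally show ?thesis .
  qed
  define \<nu> where "\<nu> n = distr (measure_pmf (embed_pmf (w n))) borel (th n)" for n
  have rd: "real_distribution (\<nu> n)" for n
    unfolding \<nu>_def by (rule embed_real_distribution[OF nn supp one])
  have intnu: "integral\<^sup>L (\<nu> n) f = (\<Sum>j<2 * Tn n. w n j *\<^sub>R f (th n j))"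
    if "f \<in> borel_measurable borel" for n and f :: "real \<Rightarrow> complex"
    unfolding \<nu>_def by (rule embed_integral[OF nn supp one that])
  have intnu_r: "integral\<^sup>L (\<nu> n) f = (\<Sum>j<2 * Tn n. w n j *\<^sub>R f (th n j))"
    if "f \<in> borel_measurable borel" for n and f :: "real \<Rightarrow> real"
    unfolding \<nu>_def by (rule embed_integral[OF nn supp one that])
  have thr: "th n j \<in> {-1<..8}" if "j < 2 * Tn n" for n j
  proof -
    have "real j < 2 * real (Tn n)" using that by linarith
    hence "real j / real (Tn n) < 2" using Tn1[of n] by (simp add: divide_less_eq)
    hence "pi * (real j / real (Tn n)) \<le> pi * 2" using pi_gt_zero by (intro mult_left_mono) auto
    hence a: "th n j \<le> pi * 2" unfolding th_def by simp
    have b: "th n j \<ge> 0" unfolding th_def by simp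
    show ?thesis using a b pi_less_4 by simp
  qed
  have tight: "tight \<nu>"
    unfolding tight_def
  proof (intro conjI allI impI rd)
    fix \<epsilon> :: real assume "\<epsilon> > 0"
    have "measure (\<nu> n) {-1<..8} = 1" for n
    proof -
      have "measure (\<nu> n) {-1<..8} = integral\<^sup>L (\<nu> n) (indicator {-1<..8})"
        by (simp add: \<nu>_def)
      also have "\<dots> = (\<Sum>j<2 * Tn n. w n j *\<^sub>R indicator {-1<..8::real} (th n j))"
        by (rule intnu_r) simp
      also have "\<dots> = (\<Sum>j<2 * Tn n. w n j)"
        using thr by (intro sum.cong refl) (simp add: indicator_def)
      finally show ?thesis using one by simp
    qed
    thus "\<exists>a b::real. a < b \<and> (\<forall>n. measure (\<nu> n) {a<..b} > 1 - \<epsilon>)"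
      using \<open>\<epsilon> > 0\<close> by (intro exI[of _ "-1"] exI[of _ 8]) auto
  qed
  obtain r \<mu> where r: "strict_mono r" and \<mu>: "real_distribution \<mu>" and wc: "weak_conv_m (\<nu> \<circ> id \<circ> r) \<mu>"
    using tight_imp_convergent_subsubsequence[OF tight, of id] by (auto simp: strict_mono_def)
  have coeff: "integral\<^sup>L \<mu> (\<lambda>x. cis (real k * x)) = hh (int k) / of_real S" for k
  proof -
    have l1: "(\<lambda>n. integral\<^sup>L ((\<nu> \<circ> id \<circ> r) n) (\<lambda>x. cis (real k * x))) \<longlonglongrightarrow> integral\<^sup>L \<mu> (\<lambda>x. cis (real k * x))"
      by (rule weak_conv_imp_integral_bdd_continuous_conv[OF _ \<mu> wc, where B=1]) (auto simp: rd isCont_cis_lin)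
    define c' where "c' m = cT m k / of_real (Sr m)" for m
    have "c' \<longlonglongrightarrow> hh (int k) / of_real S"
      unfolding c'_def S_def using Spos by (intro tendsto_divide cT_lim tendsto_of_real Sr_lim) auto
    moreover have "strict_mono (\<lambda>n. Tn (r n))"
      using r unfolding strict_mono_def Tn_def by auto
    ultimately have l2: "(c' \<circ> (\<lambda>n. Tn (r n))) \<longlonglongrightarrow> hh (int k) / of_real S"
      by (rule LIMSEQ_subseq_LIMSEQ)
    have ev: "\<forall>\<^sub>F n in sequentially. (c' \<circ> (\<lambda>n. Tn (r n))) n = integral\<^sup>L ((\<nu> \<circ> id \<circ> r) n) (\<lambda>x. cis (real k * x))"
      unfolding eventually_sequentially
    proof (intro exI[of _ k] allI impI)
      fix n assume "k \<le> n"
      hence kT: "k < Tn (r n)" using seq_suble[OF r, of n] unfolding Tn_def T0_def by linarith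
      define m where "m = r n"
      have kTm: "k < Tn m" using kT by (simp add: m_def)
      have "integral\<^sup>L (\<nu> m) (\<lambda>x. cis (real k * x)) = (\<Sum>j<2 * Tn m. w m j *\<^sub>R cis (real k * th m j))"
        by (rule intnu) (rule cis_borel)
      also have "\<dots> = (\<Sum>j<2 * Tn m. cis (real k * th m j) * of_real (PP m j)) / of_real (real (2 * Tn m) * real (Tn m) * Sr (Tn m))"
        unfolding w_def by (simp add: sum_divide_distrib scaleR_conv_of_real mult.commute)
      also have "\<dots> = of_nat (2 * Tn m) * (of_nat (Tn m) * cT (Tn m) k) / of_real (real (2 * Tn m) * real (Tn m) * Sr (Tn m))"
        by (simp only: KIn[OF kTm])
      also have "\<dots> = cT (Tn m) k / of_real (Sr (Tn m))"
        using Tn1[of m] by (simp add: field_simps)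
      finally show "(c' \<circ> (\<lambda>n. Tn (r n))) n = integral\<^sup>L ((\<nu> \<circ> id \<circ> r) n) (\<lambda>x. cis (real k * x))"
        by (simp add: c'_def m_def)
    qed
    have "(\<lambda>n. integral\<^sup>L ((\<nu> \<circ> id \<circ> r) n) (\<lambda>x. cis (real k * x))) \<longlonglongrightarrow> hh (int k) / of_real S"
      by (rule Lim_transform_eventually[OF l2 ev])
    thus ?thesis using l1 LIMSEQ_unique by blast
  qed
  show ?thesis using \<mu> coeff unfolding S_def by blast
qed


lemma g_zero: "g t = 0"
proof -
  define S where "S = Re (hh 0)"
  have "0 \<le> Re (hh 0)"
    by (rule LIMSEQ_le_const[OF Sr_lim]) (auto simp: Sr_def intro!: divide_nonneg_nonneg sum_nonneg)
  hence S0: "S \<ge> 0" by (simp add: S_def)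
  show ?thesis
  proof (cases "S = 0")
    case True
    have "(\<lambda>U. (\<Sum>u<U. (norm (g (int u)))\<^sup>2) / real U) \<longlonglongrightarrow> 0"
      using Sr_lim True unfolding S_def by (simp add: Sr_def[abs_def])
    thus ?thesis by (rule sq_mean_zero[OF tbg])
  next
    case False
    hence Spos: "Re (hh 0) > 0" using S0 by (simp add: S_def)
    hence Snz: "complex_of_real S \<noteq> 0" by (simp add: S_def)
    obtain \<mu> where \<mu>: "real_distribution \<mu>"
      and co: "\<forall>k::nat. integral\<^sup>L \<mu> (\<lambda>x. cis (real k * x)) = hh (int k) / of_real S"
      using spectral[OF Spos] unfolding S_def by blast
    interpret \<mu>: real_distribution \<mu> by (rule \<mu>)
    obtain C where C: "C > 0" "\<forall>u. norm (hh u) \<le> C" using hh_bound by blast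
    define s where "s U x = cnj (avg (\<lambda>u. hh u * cis (- (x * real_of_int u))) U 0)" for U x
    have s_eq: "s U x = (\<Sum>u<U. cnj (hh (int u)) * cis (real u * x)) / of_nat U" for U x
      by (simp add: s_def avg_complex cis_cnj mult.commute)
    have cont: "continuous_on UNIV (\<lambda>x. (\<Sum>u<U. cnj (hh (int u)) * cis (real u * x)) * inverse (of_nat U))" for U
      by (intro continuous_on_mult_right continuous_intros)
    have meas_borel: "(\<lambda>x. s U x) \<in> borel_measurable borel" for U
      unfolding s_eq divide_inverse by (rule borel_measurable_continuous_onI[OF cont])
    have meas: "(\<lambda>x. s U x) \<in> borel_measurable \<mu>" for U
      using meas_borel[of U] by (simp add: measurable_cong_sets[OF \<mu>.events_eq_borel refl])
    have bnd: "norm (s U x) \<le> C" for U x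
      unfolding s_def complex_mod_cnj
      by (rule avg_norm_le) (use C in \<open>simp add: norm_mult\<close>)
    have ptw: "(\<lambda>U. s U x) \<longlonglongrightarrow> 0" for x
      using tendsto_cnj[OF hh_coeff[of x]] unfolding s_def by simp
    have dct: "(\<lambda>U. integral\<^sup>L \<mu> (s U)) \<longlonglongrightarrow> integral\<^sup>L \<mu> (\<lambda>x. 0)"
    proof (rule integral_dominated_convergence[where w="\<lambda>_. C"])
      show "(\<lambda>x. 0::complex) \<in> borel_measurable \<mu>" by simp
      show "\<And>i. s i \<in> borel_measurable \<mu>" using meas by simp
      show "integrable \<mu> (\<lambda>_. C)" by simp
      show "AE x in \<mu>. (\<lambda>i. s i x) \<longlonglongrightarrow> 0" using ptw by simp
      show "\<And>i. AE x in \<mu>. norm (s i x) \<le> C" using bnd by simp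
    qed
    have cis_int: "integrable \<mu> (\<lambda>x. cis (a * x))" for a
    proof (rule \<mu>.integrable_const_bound[where B=1])
      show "AE x in \<mu>. norm (cis (a * x)) \<le> 1" by simp
      show "(\<lambda>x. cis (a * x)) \<in> borel_measurable \<mu>"
        using cis_borel[of a] by (simp add: measurable_cong_sets[OF \<mu>.events_eq_borel refl])
    qed
    have ints: "integral\<^sup>L \<mu> (s U) = (\<Sum>u<U. cnj (hh (int u)) * (hh (int u) / of_real S)) / of_nat U" for U
    proof -
      have "integral\<^sup>L \<mu> (s U) = integral\<^sup>L \<mu> (\<lambda>x. (\<Sum>u<U. cnj (hh (int u)) * cis (real u * x)) / of_nat U)"
        by (simp add: s_eq[abs_def])
      also have "\<dots> = (\<Sum>u<U. integral\<^sup>L \<mu> (\<lambda>x. cnj (hh (int u)) * cis (real u * x))) / of_nat U"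
        by (simp add: integral_sum cis_int)
      also have "\<dots> = (\<Sum>u<U. cnj (hh (int u)) * (hh (int u) / of_real S)) / of_nat U"
        using co by simp
      finally show ?thesis .
    qed
    have "(\<lambda>U. complex_of_real ((\<Sum>u<U. (norm (hh (int u)))\<^sup>2) / real U)) \<longlonglongrightarrow> of_real S * 0"
    proof -
      have eq: "complex_of_real ((\<Sum>u<U. (norm (hh (int u)))\<^sup>2) / real U) = of_real S * integral\<^sup>L \<mu> (s U)" for U
      proof -
        have "of_real S * integral\<^sup>L \<mu> (s U) = (\<Sum>u<U. of_real S * (cnj (hh (int u)) * (hh (int u) / of_real S))) / of_nat U"
          unfolding ints by (simp add: sum_distrib_left)
        also have "\<dots> = (\<Sum>u<U. hh (int u) * cnj (hh (int u))) / of_nat U"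
          using Snz by (simp add: field_simps)
        also have "\<dots> = (\<Sum>u<U. complex_of_real ((norm (hh (int u)))\<^sup>2)) / of_nat U"
          by (simp only: complex_norm_square)
        also have "\<dots> = complex_of_real ((\<Sum>u<U. (norm (hh (int u)))\<^sup>2) / real U)"
          unfolding of_real_divide of_real_sum by simp
        finally show ?thesis by simp
      qed
      show ?thesis unfolding eq using dct by (intro tendsto_mult tendsto_const) simp
    qed
    hence "(\<lambda>U. (\<Sum>u<U. (norm (hh (int u)))\<^sup>2) / real U) \<longlonglongrightarrow> 0"
      using tendsto_of_real_iff[where 'a=complex] by (metis mult_zero_right of_real_0)
    hence "hh 0 = 0" by (rule sq_mean_zero[OF TB_hh])
    thus ?thesis using Spos by simp
  qed
qed

end



lemma expcis: "exp (- (\<i> * complex_of_real x)) = cis (- x)"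
  by (simp add: cis_conv_exp)

lemma apmean_avg: "ap_mean f = lim (\<lambda>n. avg f n 0)"
  unfolding ap_mean_def avg_def by simp

lemma avg_cis_lim:
  assumes "\<bar>a\<bar> < 2 * pi"
  shows "(\<lambda>n. avg (\<lambda>t. cis (a * real_of_int t)) n 0) \<longlonglongrightarrow> (if a = 0 then 1 else 0)"
proof (cases "a = 0")
  case True
  have "\<forall>\<^sub>F n in sequentially. (1::complex) = avg (\<lambda>t. cis (a * real_of_int t)) n 0"
    unfolding eventually_sequentially
    by (intro exI[of _ 1] allI impI) (simp add: True avg_complex)
  hence "(\<lambda>n. avg (\<lambda>t. cis (a * real_of_int t)) n 0) \<longlonglongrightarrow> 1"
    by (rule Lim_transform_eventually[OF tendsto_const])
  thus ?thesis using True by simp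
next
  case False
  have z: "cis a \<noteq> 1" using False assms by (intro cis_ne_1) auto
  have "(\<lambda>n. avg (\<lambda>t. cis (a * real_of_int t)) n 0) \<longlonglongrightarrow> 0"
  proof (rule Lim_null_comparison)
    show "\<forall>\<^sub>F n in sequentially. norm (avg (\<lambda>t. cis (a * real_of_int t)) n 0) \<le> (2 / norm (cis a - 1)) / real n"
    proof (intro always_eventually allI)
      fix n
      have "norm (avg (\<lambda>t. cis (a * real_of_int t)) n 0) = norm (\<Sum>j<n. cis (a * real j)) / real n"
        by (simp add: avg_complex norm_divide)
      also have "\<dots> \<le> (2 / norm (cis a - 1)) / real n"
        by (intro divide_right_mono sum_cis_geom z) simp
      finally show "norm (avg (\<lambda>t. cis (a * real_of_int t)) n 0) \<le> (2 / norm (cis a - 1)) / real n" .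
    qed
    show "(\<lambda>n. (2 / norm (cis a - 1)) / real n) \<longlonglongrightarrow> 0" by (rule lim_const_over_n)
  qed
  thus ?thesis using False by simp
qed

lemma avg_sum_lin:
  "avg (\<lambda>t. \<Sum>x\<in>A. c x * F x t) n s = (\<Sum>x\<in>A. c x * avg (F x) n s)"
  for F :: "'i \<Rightarrow> int \<Rightarrow> complex"
  unfolding avg_complex
  by (simp add: sum_distrib_left sum_divide_distrib[symmetric] sum.swap[of _ A] mult.assoc)

lemma avg_diff_c: "avg (\<lambda>t. f t - h t) n s = avg f n s - avg h n s" for f h :: "int \<Rightarrow> complex"
  unfolding avg_complex by (simp add: sum_subtractf diff_divide_distrib)

lemma sum_interval_int: "(\<Sum>t\<in>{s..s + int b - 1}. F t) = (\<Sum>j<b. F (s + int j))"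
proof -
  have img: "{s..s + int b - 1} = (\<lambda>j. s + int j) ` {..<b}"
  proof (rule equalityI)
    show "{s..s + int b - 1} \<subseteq> (\<lambda>j. s + int j) ` {..<b}"
    proof
      fix t assume t: "t \<in> {s..s + int b - 1}"
      hence "t = s + int (nat (t - s))" "nat (t - s) < b" by auto
      thus "t \<in> (\<lambda>j. s + int j) ` {..<b}" by blast
    qed
    show "(\<lambda>j. s + int j) ` {..<b} \<subseteq> {s..s + int b - 1}" by auto
  qed
  have inj: "inj_on (\<lambda>j. s + int j) {..<b}" by (auto simp: inj_on_def)
  show ?thesis unfolding img by (simp add: sum.reindex[OF inj])
qed

lemma cis_window:
  assumes "cis a \<noteq> 1"
  shows "norm (\<Sum>t\<in>{s..s + int b - 1}. cis (a * real_of_int t)) \<le> 2 / norm (cis a - 1)"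
proof -
  have "(\<Sum>t\<in>{s..s + int b - 1}. cis (a * real_of_int t)) = (\<Sum>j<b. cis (a * real_of_int s) * cis (a * real j))"
    unfolding sum_interval_int by (intro sum.cong refl) (simp add: cis_mult distrib_left)
  also have "\<dots> = cis (a * real_of_int s) * (\<Sum>j<b. cis (a * real j))" by (simp add: sum_distrib_left)
  finally have "norm (\<Sum>t\<in>{s..s + int b - 1}. cis (a * real_of_int t)) = norm (\<Sum>j<b. cis (a * real j))"
    by (simp add: norm_mult)
  thus ?thesis using sum_cis_geom[OF assms, of b] by simp
qed

lemma fourth_bound: "(a + c :: real) ^ 4 \<le> 8 * a ^ 4 + 8 * c ^ 4"
proof -
  have 1: "(a + c)\<^sup>2 \<le> 2 * (a\<^sup>2 + c\<^sup>2)"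
  proof -
    have "0 \<le> (a - c)\<^sup>2" by simp
    thus ?thesis by (simp add: power2_eq_square algebra_simps)
  qed
  have 2: "(a\<^sup>2 + c\<^sup>2)\<^sup>2 \<le> 2 * (a ^ 4 + c ^ 4)"
  proof -
    have "0 \<le> (a\<^sup>2 - c\<^sup>2)\<^sup>2" by simp
    thus ?thesis by (simp add: power2_eq_square algebra_simps power4_eq_xxxx)
  qed
  have "(a + c) ^ 4 = ((a + c)\<^sup>2)\<^sup>2" by (simp add: power_mult[symmetric])
  also have "\<dots> \<le> (2 * (a\<^sup>2 + c\<^sup>2))\<^sup>2" using 1 by (intro power_mono) auto
  also have "\<dots> = 4 * (a\<^sup>2 + c\<^sup>2)\<^sup>2" by (simp add: power2_eq_square algebra_simps)
  also have "\<dots> \<le> 8 * a ^ 4 + 8 * c ^ 4" using 2 by simp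
  finally show ?thesis .
qed

theorem lemmaA5:
  fixes M :: "'a measure" and X :: "int \<Rightarrow> 'a \<Rightarrow> real" and K :: real
  assumes "prob_space M"
    and "\<And>t. X t \<in> borel_measurable M"
    and "WAP1 M X"
    and "finite {lam::real. 0 \<le> lam \<and> lam < 2 * pi \<and>
           ap_mean (\<lambda>t. complex_of_real (integral\<^sup>L M (X t)) * exp (- (\<i> * complex_of_real (lam * real_of_int t)))) \<noteq> 0}"
    and "\<And>n b s. 1 \<le> b \<Longrightarrow> b \<le> n \<Longrightarrow> 1 \<le> s \<Longrightarrow> s \<le> int n - int b + 1 \<Longrightarrow>
           integrable M (\<lambda>\<omega>. ((1 / sqrt (real b)) * (\<Sum>t\<in>{s..s + int b - 1}. X t \<omega> - integral\<^sup>L M (X t))) ^ 4)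
         \<and> integral\<^sup>L M (\<lambda>\<omega>. ((1 / sqrt (real b)) * (\<Sum>t\<in>{s..s + int b - 1}. X t \<omega> - integral\<^sup>L M (X t))) ^ 4) < K"
  shows "\<exists>K'::real. \<forall>n b s. 1 \<le> b \<longrightarrow> b \<le> n \<longrightarrow> 1 \<le> s \<longrightarrow> s \<le> int n - int b + 1 \<longrightarrow>
           integrable M (\<lambda>\<omega>. ((1 / sqrt (real b)) * (\<Sum>t\<in>{s..s + int b - 1}. X t \<omega> - ap_mean (\<lambda>t. integral\<^sup>L M (X t)))) ^ 4)
         \<and> integral\<^sup>L M (\<lambda>\<omega>. ((1 / sqrt (real b)) * (\<Sum>t\<in>{s..s + int b - 1}. X t \<omega> - ap_mean (\<lambda>t. integral\<^sup>L M (X t)))) ^ 4) < K'"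
proof -
  interpret P: prob_space M by (rule assms(1))
  note [measurable] = assms(2)
  define m where "m = (\<lambda>t. integral\<^sup>L M (X t))"
  have tbm: "TB m" using assms(3) AP_imp_TB unfolding WAP1_def m_def by auto
  define mc where "mc t = complex_of_real (m t)" for t
  have tbmc: "TB mc" unfolding mc_def by (rule TB_of_real[OF tbm])
  define co where "co l = ap_mean (\<lambda>t. complex_of_real (integral\<^sup>L M (X t)) * exp (- (\<i> * complex_of_real (l * real_of_int t))))" for l
  have Gl: "(\<lambda>t. complex_of_real (integral\<^sup>L M (X t)) * exp (- (\<i> * complex_of_real (l * real_of_int t))))
      = (\<lambda>t. mc t * cis (- (l * real_of_int t)))" for l
    by (simp only: expcis mc_def m_def)
  have co_lim: "(\<lambda>n. avg (\<lambda>t. mc t * cis (- (l * real_of_int t))) n 0) \<longlonglongrightarrow> co l" for l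
  proof -
    have "TB (\<lambda>t. mc t * cis ((- l) * real_of_int t))" by (intro TB_mult tbmc TB_cis)
    hence tb: "TB (\<lambda>t. mc t * cis (- (l * real_of_int t)))" by simp
    show ?thesis using mean_conv[OF tb] unfolding co_def Gl apmean_avg .
  qed
  define \<Lambda> where "\<Lambda> = {l::real. 0 \<le> l \<and> l < 2 * pi \<and> co l \<noteq> 0}"
  have fin: "finite \<Lambda>" using assms(4) unfolding \<Lambda>_def co_def .
  define P where "P t = (\<Sum>\<mu>\<in>\<Lambda>. co \<mu> * cis (\<mu> * real_of_int t))" for t
  define g where "g t = mc t - P t" for t
  have tbg: "TB g" unfolding g_def P_def
    by (intro TB_diff tbmc TB_sum fin TB_mult TB_const TB_cis)
  have key: "(\<lambda>n. avg (\<lambda>t. g t * cis (- (l * real_of_int t))) n 0)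
      \<longlonglongrightarrow> co l - (\<Sum>\<mu>\<in>\<Lambda>. co \<mu> * (if \<mu> - l = 0 then 1 else 0))"
    if l: "0 \<le> l" "l < 2 * pi" for l
  proof -
    have pt: "g t * cis (- (l * real_of_int t))
        = mc t * cis (- (l * real_of_int t)) - (\<Sum>\<mu>\<in>\<Lambda>. co \<mu> * cis ((\<mu> - l) * real_of_int t))" for t
    proof -
      have "P t * cis (- (l * real_of_int t)) = (\<Sum>\<mu>\<in>\<Lambda>. co \<mu> * (cis (\<mu> * real_of_int t) * cis (- (l * real_of_int t))))"
        unfolding P_def by (simp add: sum_distrib_right mult.assoc)
      also have "\<dots> = (\<Sum>\<mu>\<in>\<Lambda>. co \<mu> * cis ((\<mu> - l) * real_of_int t))"
        by (intro sum.cong refl) (simp add: cis_mult left_diff_distrib)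
      finally show ?thesis unfolding g_def by (simp add: left_diff_distrib)
    qed
    have eq: "avg (\<lambda>t. g t * cis (- (l * real_of_int t))) n 0
        = avg (\<lambda>t. mc t * cis (- (l * real_of_int t))) n 0 - (\<Sum>\<mu>\<in>\<Lambda>. co \<mu> * avg (\<lambda>t. cis ((\<mu> - l) * real_of_int t)) n 0)" for n
      unfolding pt avg_diff_c avg_sum_lin ..
    have "(\<lambda>n. \<Sum>\<mu>\<in>\<Lambda>. co \<mu> * avg (\<lambda>t. cis ((\<mu> - l) * real_of_int t)) n 0)
        \<longlonglongrightarrow> (\<Sum>\<mu>\<in>\<Lambda>. co \<mu> * (if \<mu> - l = 0 then 1 else 0))"
    proof (intro tendsto_sum tendsto_mult tendsto_const)
      fix \<mu> assume "\<mu> \<in> \<Lambda>"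
      hence "\<bar>\<mu> - l\<bar> < 2 * pi" using l unfolding \<Lambda>_def by auto
      thus "(\<lambda>n. avg (\<lambda>t. cis ((\<mu> - l) * real_of_int t)) n 0) \<longlonglongrightarrow> (if \<mu> - l = 0 then 1 else 0)"
        by (rule avg_cis_lim)
    qed
    thus ?thesis unfolding eq by (intro tendsto_diff co_lim)
  qed
  have per: "cis (x + 2 * pi * real_of_int k) = cis x" for x k
    by (simp add: cis_mult[symmetric])
  have hyp0: "(\<lambda>n. avg (\<lambda>t. g t * cis (- (l * real_of_int t))) n 0) \<longlonglongrightarrow> 0" for l
  proof -
    define q where "q = \<lfloor>l / (2 * pi)\<rfloor>"
    define l' where "l' = l - 2 * pi * real_of_int q"
    have fl: "real_of_int q \<le> l / (2 * pi)" "l / (2 * pi) < real_of_int q + 1"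
      unfolding q_def by linarith+
    have "2 * pi * real_of_int q \<le> l" using fl(1) pi_gt_zero by (simp add: field_simps)
    moreover have "l < 2 * pi * real_of_int q + 2 * pi" using fl(2) pi_gt_zero by (simp add: field_simps)
    ultimately have l': "0 \<le> l'" "l' < 2 * pi" unfolding l'_def by linarith+
    have ceq: "cis (- (l * real_of_int t)) = cis (- (l' * real_of_int t))" for t :: int
    proof -
      have "- (l * real_of_int t) = - (l' * real_of_int t) + 2 * pi * real_of_int (- q * t)"
        unfolding l'_def by (simp add: algebra_simps)
      hence "cis (- (l * real_of_int t)) = cis (- (l' * real_of_int t) + 2 * pi * real_of_int (- q * t))"
        by (rule arg_cong)
      also have "\<dots> = cis (- (l' * real_of_int t))" by (rule per)
      finally show ?thesis .
    qed
    have zero: "co l' - (\<Sum>\<mu>\<in>\<Lambda>. co \<mu> * (if \<mu> - l' = 0 then 1 else 0)) = 0"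
    proof -
      have "(\<Sum>\<mu>\<in>\<Lambda>. co \<mu> * (if \<mu> - l' = 0 then 1 else 0)) = (\<Sum>\<mu>\<in>\<Lambda>. if \<mu> = l' then co \<mu> else 0)"
        by (intro sum.cong refl) auto
      also have "\<dots> = (if l' \<in> \<Lambda> then co l' else 0)" using fin by simp
      also have "\<dots> = co l'" using l' unfolding \<Lambda>_def by auto
      finally show ?thesis by simp
    qed
    show ?thesis using key[OF l'] unfolding zero ceq .
  qed
  have gz: "g t = 0" for t by (rule g_zero[OF tbg hyp0])
  hence mcP: "mc t = P t" for t unfolding g_def by simp
  define \<mu>0 where "\<mu>0 = ap_mean (\<lambda>t. integral\<^sup>L M (X t))"
  have m_lim: "(\<lambda>n. avg m n 0) \<longlonglongrightarrow> \<mu>0"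
    using mean_conv[OF tbm] unfolding \<mu>0_def apmean_avg m_def .
  define c0 where "c0 = (\<Sum>\<mu>\<in>\<Lambda>. co \<mu> * (if \<mu> - 0 = 0 then 1 else 0))"
  have c0co: "co 0 = c0"
  proof -
    have "(\<lambda>n. avg (\<lambda>t. g t * cis (- (0 * real_of_int t))) n 0) \<longlonglongrightarrow> co 0 - c0"
      unfolding c0_def by (rule key) simp_all
    moreover have "(\<lambda>n. avg (\<lambda>t. g t * cis (- (0 * real_of_int t))) n 0) = (\<lambda>n. 0)"
      by (simp add: gz avg_def)
    ultimately have "(\<lambda>n. 0::complex) \<longlonglongrightarrow> co 0 - c0" by simp
    hence "co 0 - c0 = 0" by (simp add: LIMSEQ_const_iff)
    thus ?thesis by simp
  qed
  have muc: "complex_of_real \<mu>0 = c0"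
  proof -
    have "(\<lambda>n. avg (\<lambda>t. mc t * cis (- (0 * real_of_int t))) n 0) \<longlonglongrightarrow> co 0" by (rule co_lim)
    moreover have "avg (\<lambda>t. mc t * cis (- (0 * real_of_int t))) n 0 = complex_of_real (avg m n 0)" for n
      by (simp add: avg_def mc_def scaleR_conv_of_real)
    ultimately have "(\<lambda>n. complex_of_real (avg m n 0)) \<longlonglongrightarrow> co 0" by simp
    moreover have "(\<lambda>n. complex_of_real (avg m n 0)) \<longlonglongrightarrow> complex_of_real \<mu>0"
      by (intro tendsto_of_real m_lim)
    ultimately show ?thesis using c0co LIMSEQ_unique by metis
  qed
  define Cw where "Cw = (\<Sum>\<mu>\<in>\<Lambda>. norm (co \<mu>) * (if \<mu> = 0 then 0 else 2 / norm (cis \<mu> - 1)))"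
  have wb: "\<bar>\<Sum>t\<in>{s..s + int b - 1}. m t - \<mu>0\<bar> \<le> Cw" for s b
  proof -
    let ?I = "{s..s + int b - 1}"
    have "complex_of_real (\<Sum>t\<in>?I. m t - \<mu>0) = (\<Sum>t\<in>?I. P t - c0)"
      unfolding of_real_sum of_real_diff muc[symmetric] by (simp add: mcP[symmetric] mc_def)
    also have "\<dots> = (\<Sum>t\<in>?I. \<Sum>\<mu>\<in>\<Lambda>. co \<mu> * (cis (\<mu> * real_of_int t) - (if \<mu> = 0 then 1 else 0)))"
      unfolding P_def c0_def by (simp add: right_diff_distrib sum_subtractf)
    also have "\<dots> = (\<Sum>\<mu>\<in>\<Lambda>. co \<mu> * (\<Sum>t\<in>?I. cis (\<mu> * real_of_int t) - (if \<mu> = 0 then 1 else 0)))"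
      by (subst sum.swap) (simp add: sum_distrib_left)
    finally have eqc: "complex_of_real (\<Sum>t\<in>?I. m t - \<mu>0)
        = (\<Sum>\<mu>\<in>\<Lambda>. co \<mu> * (\<Sum>t\<in>?I. cis (\<mu> * real_of_int t) - (if \<mu> = 0 then 1 else 0)))" .
    have "\<bar>\<Sum>t\<in>?I. m t - \<mu>0\<bar> = norm (complex_of_real (\<Sum>t\<in>?I. m t - \<mu>0))"
      by (rule norm_of_real[symmetric])
    also have "\<dots> \<le> (\<Sum>\<mu>\<in>\<Lambda>. norm (co \<mu> * (\<Sum>t\<in>?I. cis (\<mu> * real_of_int t) - (if \<mu> = 0 then 1 else 0))))"
      unfolding eqc by (rule norm_sum)
    also have "\<dots> \<le> Cw" unfolding Cw_def
    proof (rule sum_mono)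
      fix \<mu> assume mu: "\<mu> \<in> \<Lambda>"
      show "norm (co \<mu> * (\<Sum>t\<in>?I. cis (\<mu> * real_of_int t) - (if \<mu> = 0 then 1 else 0)))
          \<le> norm (co \<mu>) * (if \<mu> = 0 then 0 else 2 / norm (cis \<mu> - 1))"
      proof (cases "\<mu> = 0")
        case True thus ?thesis by simp
      next
        case False
        have "0 < \<bar>\<mu>\<bar>" "\<bar>\<mu>\<bar> < 2 * pi" using mu False unfolding \<Lambda>_def by auto
        hence z: "cis \<mu> \<noteq> 1" by (rule cis_ne_1)
        have "norm (\<Sum>t\<in>?I. cis (\<mu> * real_of_int t) - 0) \<le> 2 / norm (cis \<mu> - 1)"
          using cis_window[OF z, of s b] by simp
        hence "norm (co \<mu>) * norm (\<Sum>t\<in>?I. cis (\<mu> * real_of_int t) - 0) \<le> norm (co \<mu>) * (2 / norm (cis \<mu> - 1))"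
          by (rule mult_left_mono) simp
        thus ?thesis using False unfolding norm_mult by simp
      qed
    qed
    finally show ?thesis .
  qed
  have Cw0: "Cw \<ge> 0" using wb[of 0 0] by simp
  show ?thesis
  proof (intro exI[of _ "8 * K + 8 * Cw ^ 4"] allI impI)
    fix n b :: nat and s :: int
    assume nb: "1 \<le> b" "b \<le> n" "1 \<le> s" "s \<le> int n - int b + 1"
    let ?I = "{s..s + int b - 1}"
    define Y where "Y \<omega> = (1 / sqrt (real b)) * (\<Sum>t\<in>?I. X t \<omega> - integral\<^sup>L M (X t))" for \<omega>
    define d where "d = (1 / sqrt (real b)) * (\<Sum>t\<in>?I. m t - \<mu>0)"
    have hyp: "integrable M (\<lambda>\<omega>. (Y \<omega>) ^ 4) \<and> integral\<^sup>L M (\<lambda>\<omega>. (Y \<omega>) ^ 4) < K"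
      using assms(5)[OF nb] unfolding Y_def .
    have Zeq: "(1 / sqrt (real b)) * (\<Sum>t\<in>?I. X t \<omega> - ap_mean (\<lambda>t. integral\<^sup>L M (X t))) = Y \<omega> + d" for \<omega>
    proof -
      have "(\<Sum>t\<in>?I. X t \<omega> - \<mu>0) = (\<Sum>t\<in>?I. X t \<omega> - integral\<^sup>L M (X t)) + (\<Sum>t\<in>?I. m t - \<mu>0)"
        unfolding m_def by (simp add: sum.distrib[symmetric])
      thus ?thesis unfolding Y_def d_def \<mu>0_def[symmetric] by (simp add: distrib_left)
    qed
    have dC: "\<bar>d\<bar> \<le> Cw"
    proof -
      have sb: "sqrt (real b) \<ge> 1" using nb(1) by simp
      have "\<bar>d\<bar> = \<bar>\<Sum>t\<in>?I. m t - \<mu>0\<bar> / sqrt (real b)" unfolding d_def by (simp add: abs_mult)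
      also have "\<dots> \<le> \<bar>\<Sum>t\<in>?I. m t - \<mu>0\<bar>"
      proof -
        have "\<bar>\<Sum>t\<in>?I. m t - \<mu>0\<bar> * 1 \<le> \<bar>\<Sum>t\<in>?I. m t - \<mu>0\<bar> * sqrt (real b)"
          by (rule mult_left_mono[OF sb]) simp
        thus ?thesis using sb by (simp add: divide_le_eq)
      qed
      also have "\<dots> \<le> Cw" by (rule wb)
      finally show ?thesis .
    qed
    have d4: "d ^ 4 \<le> Cw ^ 4"
    proof -
      have "d ^ 4 = \<bar>d\<bar> ^ 4" by (simp add: power_even_abs)
      also have "\<dots> \<le> Cw ^ 4" using dC by (intro power_mono) auto
      finally show ?thesis .
    qed
    have bnd: "(Y \<omega> + d) ^ 4 \<le> 8 * (Y \<omega>) ^ 4 + 8 * Cw ^ 4" for \<omega>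
      using fourth_bound[of "Y \<omega>" d] d4 by linarith
    have Ymeas: "Y \<in> borel_measurable M" unfolding Y_def by measurable
    have int8: "integrable M (\<lambda>\<omega>. 8 * (Y \<omega>) ^ 4 + 8 * Cw ^ 4)"
      using hyp by (intro Bochner_Integration.integrable_add integrable_mult_right) auto
    have Zint: "integrable M (\<lambda>\<omega>. (Y \<omega> + d) ^ 4)"
    proof (rule Bochner_Integration.integrable_bound[OF int8])
      show "(\<lambda>\<omega>. (Y \<omega> + d) ^ 4) \<in> borel_measurable M" using Ymeas by measurable
      show "AE \<omega> in M. norm ((Y \<omega> + d) ^ 4) \<le> norm (8 * (Y \<omega>) ^ 4 + 8 * Cw ^ 4)"
      proof (intro AE_I2)
        fix \<omega>
        have "0 \<le> (Y \<omega> + d) ^ 4" by (simp add: zero_le_even_power)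
        moreover have "0 \<le> 8 * (Y \<omega>) ^ 4 + 8 * Cw ^ 4" by (simp add: zero_le_even_power)
        ultimately show "norm ((Y \<omega> + d) ^ 4) \<le> norm (8 * (Y \<omega>) ^ 4 + 8 * Cw ^ 4)"
          using bnd[of \<omega>] by simp
      qed
    qed
    have "integral\<^sup>L M (\<lambda>\<omega>. (Y \<omega> + d) ^ 4) \<le> integral\<^sup>L M (\<lambda>\<omega>. 8 * (Y \<omega>) ^ 4 + 8 * Cw ^ 4)"
      by (intro integral_mono Zint int8 bnd)
    also have "\<dots> = 8 * integral\<^sup>L M (\<lambda>\<omega>. (Y \<omega>) ^ 4) + 8 * Cw ^ 4"
      using hyp by (simp add: Bochner_Integration.integral_add P.prob_space)
    also have "\<dots> < 8 * K + 8 * Cw ^ 4" using hyp by simp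
    finally have lt: "integral\<^sup>L M (\<lambda>\<omega>. (Y \<omega> + d) ^ 4) < 8 * K + 8 * Cw ^ 4" .
    show "integrable M (\<lambda>\<omega>. ((1 / sqrt (real b)) * (\<Sum>t\<in>?I. X t \<omega> - ap_mean (\<lambda>t. integral\<^sup>L M (X t)))) ^ 4)
        \<and> integral\<^sup>L M (\<lambda>\<omega>. ((1 / sqrt (real b)) * (\<Sum>t\<in>?I. X t \<omega> - ap_mean (\<lambda>t. integral\<^sup>L M (X t)))) ^ 4) < 8 * K + 8 * Cw ^ 4"
      unfolding Zeq using Zint lt by simp
  qed
qed


end
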